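(* Let $f_1,\dots,f_k$ be $C^1$ diffeomorphisms of a compact $d$-dimensional Riemannian manifold $M$ preserving the volume $m$, and suppose the associated Bernoulli IFS is $(n_0,\kappa_1,\kappa_2,b)$-uniform. Then there exist $C_1,\sigma>0$ such that for every $x\in M$, every $(d-b)$-dimensional subspace $E\subset T_xM$ and every integer $n\ge0$, $$\mathbb E\Big(\sup_{v\in U(E^\perp)}\big\|P_{(Df^n_\omega(x)E)^\perp}Df^n_\omega(x)v\big\|^{\sigma}\Big)<C_1e^{-n\sigma\kappa_1},\qquad \mathbb E\Big(\big(\inf_{v\in U(E)}\|Df^n_\omega(x)v\|\big)^{-\sigma}\Big)<C_1e^{n\sigma\kappa_2}.$$
   Context: Bernoulli IFS: $\Omega=\{1,\dots,k\}^{\mathbb Z}$ with the uniform Bernoulli probability $\mathbb P$; for $\omega\in\Omega$ and $n\ge1$, $f^n_\omega=f_{\omega_{n-1}}\circ\cdots\circ f_{\omega_0}$ ($f^0_\omega=\mathrm{id}$); $\mathbb E$ denotes expectation in $\omega$. $U(G)$ is the set of unit vectors of a subspace $G$, $E^\perp$ the orthogonal complement, $P_G$ the orthogonal projection onto $G$. For $x\in M$, $E\subset T_xM$ of dimension $d-b$: $C(x,E,n)=\mathbb E\big(\log\sup_{v\in U(E^\perp)}\|P_{(Df^n_\omega(x)E)^\perp}Df^n_\omega(x)v\|\big)$, $D(x,E,n)=\mathbb E\big(\log\inf_{u\in U(E)}\|Df^n_\omega(x)u\|\big)$. The IFS is $(n_0,\kappa_1,\kappa_2,b)$-uniform ($n_0\ge1$,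 $\kappa_1>0$, $\kappa_2<\kappa_1$, $b\in[1,d-1]$) if for all such $x,E$: $\frac1{n_0}C(x,E,n_0)<-\kappa_1$ and $\frac1{n_0}D(x,E,n_0)>-\kappa_2$. *)

theory Defs
  imports "HOL-Probability.Probability"
begin

section \<open>Compact embedded C1 submanifolds of a Euclidean space (with induced Riemannian metric)\<close>

definition C1_on :: "'a::euclidean_space set \<Rightarrow> ('a \<Rightarrow> 'b::euclidean_space) \<Rightarrow> bool" where
  "C1_on S g \<longleftrightarrow> (\<exists>D :: 'a \<Rightarrow> ('a \<Rightarrow>\<^sub>L 'b).
       (\<forall>y\<in>S. (g has_derivative blinfun_apply (D y)) (at y)) \<and> continuous_on S D)"

definition C1_submanifold :: "'m::euclidean_space itself \<Rightarrow> 'a::euclidean_space set \<Rightarrow> bool" where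
  "C1_submanifold _ M \<longleftrightarrow> (\<forall>x\<in>M. \<exists>U (W :: 'm set) \<phi> \<psi> (D :: 'm \<Rightarrow> ('m \<Rightarrow>\<^sub>L 'a)).
       open U \<and> x \<in> U \<and> open W \<and> homeomorphism W (M \<inter> U) \<phi> \<psi> \<and>
       (\<forall>w\<in>W. (\<phi> has_derivative blinfun_apply (D w)) (at w) \<and> inj (blinfun_apply (D w))) \<and>
       continuous_on W D)"

definition tangent_space :: "'a::euclidean_space set \<Rightarrow> 'a \<Rightarrow> 'a set" where
  "tangent_space M x = {v. \<exists>\<gamma>::real \<Rightarrow> 'a. (\<forall>t. \<gamma> t \<in> M) \<and> \<gamma> 0 = x \<and>
                              (\<gamma> has_vector_derivative v) (at 0)}"

definition Dmap :: "('a::euclidean_space \<Rightarrow> 'a) \<Rightarrow> 'a \<Rightarrow> 'a \<Rightarrow> 'a" where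
  "Dmap g x = frechet_derivative g (at x)"

text \<open>g is a C1 diffeomorphism of M: it is (the restriction to M of) a C1 map of the ambient
  space, maps M bijectively onto M, and its inverse on M is (the restriction of) a C1 map.\<close>
definition C1_diffeo_of :: "'a::euclidean_space set \<Rightarrow> ('a \<Rightarrow> 'a) \<Rightarrow> bool" where
  "C1_diffeo_of M g \<longleftrightarrow> C1_on UNIV g \<and> g ` M = M \<and>
     (\<exists>h. C1_on UNIV h \<and> (\<forall>x\<in>M. h (g x) = x \<and> g (h x) = x))"

text \<open>Gram determinant of d vectors (squared d-dimensional volume of the parallelotope).\<close>
definition gram_det :: "nat \<Rightarrow> (nat \<Rightarrow> 'a::real_inner) \<Rightarrow> real" where
  "gram_det d v = (\<Sum>p\<in>{p. p permutes {..<d}}. of_int (sign p) * (\<Prod>i<d. v i \<bullet> v (p i)))"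

text \<open>g preserves the Riemannian volume of the d-dimensional manifold M
  (Jacobian determinant of Dg(x) : T_xM \<rightarrow> T_{g x}M has absolute value 1 everywhere).\<close>
definition volume_preserving :: "nat \<Rightarrow> 'a::euclidean_space set \<Rightarrow> ('a \<Rightarrow> 'a) \<Rightarrow> bool" where
  "volume_preserving d M g \<longleftrightarrow> (\<forall>x\<in>M. \<forall>v. (\<forall>i<d. v i \<in> tangent_space M x) \<longrightarrow>
       gram_det d (\<lambda>i. Dmap g x (v i)) = gram_det d v)"

definition unit_vecs :: "'a::real_normed_vector set \<Rightarrow> 'a set" where
  "unit_vecs G = {v\<in>G. norm v = 1}"

text \<open>Orthogonal complement of E inside the ambient space T (here T = a tangent space).\<close>
definition orth_compl_in :: "'a::real_inner set \<Rightarrow> 'a set \<Rightarrow> 'a set" where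
  "orth_compl_in T E = {v\<in>T. \<forall>u\<in>E. u \<bullet> v = 0}"

definition proj_onto :: "'a::real_inner set \<Rightarrow> 'a \<Rightarrow> 'a" where
  "proj_onto G v = (THE w. w \<in> G \<and> (\<forall>u\<in>G. (v - w) \<bullet> u = 0))"

definition bernoulli_space :: "nat \<Rightarrow> (int \<Rightarrow> nat) measure" where
  "bernoulli_space k = PiM UNIV (\<lambda>_::int. measure_pmf (pmf_of_set {1..k}))"

primrec fiter :: "(nat \<Rightarrow> 'a \<Rightarrow> 'a) \<Rightarrow> (int \<Rightarrow> nat) \<Rightarrow> nat \<Rightarrow> 'a \<Rightarrow> 'a" where
  "fiter f \<omega> 0 = id"
| "fiter f \<omega> (Suc n) = f (\<omega> (int n)) \<circ> fiter f \<omega> n"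

definition Dfn :: "(nat \<Rightarrow> 'a::euclidean_space \<Rightarrow> 'a) \<Rightarrow> (int \<Rightarrow> nat) \<Rightarrow> nat \<Rightarrow> 'a \<Rightarrow> 'a \<Rightarrow> 'a" where
  "Dfn f \<omega> n x = Dmap (fiter f \<omega> n) x"

definition sup_transv :: "'a::euclidean_space set \<Rightarrow> (nat \<Rightarrow> 'a \<Rightarrow> 'a) \<Rightarrow> 'a \<Rightarrow> 'a set \<Rightarrow> nat \<Rightarrow> (int \<Rightarrow> nat) \<Rightarrow> real" where
  "sup_transv M f x E n \<omega> =
     (SUP v\<in>unit_vecs (orth_compl_in (tangent_space M x) E).
        norm (proj_onto (orth_compl_in (tangent_space M (fiter f \<omega> n x)) (Dfn f \<omega> n x ` E))
                        (Dfn f \<omega> n x v)))"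

definition inf_along :: "(nat \<Rightarrow> 'a::euclidean_space \<Rightarrow> 'a) \<Rightarrow> 'a \<Rightarrow> 'a set \<Rightarrow> nat \<Rightarrow> (int \<Rightarrow> nat) \<Rightarrow> real" where
  "inf_along f x E n \<omega> = (INF u\<in>unit_vecs E. norm (Dfn f \<omega> n x u))"

definition C_fun :: "nat \<Rightarrow> 'a::euclidean_space set \<Rightarrow> (nat \<Rightarrow> 'a \<Rightarrow> 'a) \<Rightarrow> 'a \<Rightarrow> 'a set \<Rightarrow> nat \<Rightarrow> real" where
  "C_fun k M f x E n = (\<integral>\<omega>. ln (sup_transv M f x E n \<omega>) \<partial>bernoulli_space k)"

definition D_fun :: "nat \<Rightarrow> (nat \<Rightarrow> 'a::euclidean_space \<Rightarrow> 'a) \<Rightarrow> 'a \<Rightarrow> 'a set \<Rightarrow> nat \<Rightarrow> real" where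
  "D_fun k f x E n = (\<integral>\<omega>. ln (inf_along f x E n \<omega>) \<partial>bernoulli_space k)"

definition uniform_IFS :: "nat \<Rightarrow> nat \<Rightarrow> 'a::euclidean_space set \<Rightarrow> (nat \<Rightarrow> 'a \<Rightarrow> 'a) \<Rightarrow>
     nat \<Rightarrow> real \<Rightarrow> real \<Rightarrow> nat \<Rightarrow> bool" where
  "uniform_IFS k d M f n0 \<kappa>1 \<kappa>2 b \<longleftrightarrow>
     n0 \<ge> 1 \<and> \<kappa>1 > 0 \<and> \<kappa>2 < \<kappa>1 \<and> 1 \<le> b \<and> b \<le> d - 1 \<and>
     (\<forall>x\<in>M. \<forall>E. subspace E \<and> E \<subseteq> tangent_space M x \<and> dim E = d - b \<longrightarrow>
        C_fun k M f x E n0 / real n0 < - \<kappa>1 \<and> D_fun k f x E n0 / real n0 > - \<kappa>2)"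

end

theory Submission
  imports Defs
begin

lemma proj_ex1:
  fixes G :: "'a::euclidean_space set"
  assumes "subspace G"
  shows "\<exists>!w. w \<in> G \<and> (\<forall>u\<in>G. (v - w) \<bullet> u = 0)"
proof -
  obtain y z where y: "y \<in> span G" and z: "\<And>w. w \<in> span G \<Longrightarrow> orthogonal z w" and v: "v = y + z"
    using orthogonal_subspace_decomp_exists by blast
  have sG: "span G = G" using assms by (simp add: span_eq_iff)
  have ex: "y \<in> G \<and> (\<forall>u\<in>G. (v - y) \<bullet> u = 0)"
    using y z v sG by (simp add: orthogonal_def)
  show ?thesis
  proof (rule ex1I[of _ y])
    show "y \<in> G \<and> (\<forall>u\<in>G. (v - y) \<bullet> u = 0)" by (rule ex)
    fix w assume w: "w \<in> G \<and> (\<forall>u\<in>G. (v - w) \<bullet> u = 0)"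
    have "y - w \<in> G" using w ex assms by (simp add: subspace_diff)
    then have "(v - w) \<bullet> (y - w) = 0" "(v - y) \<bullet> (y - w) = 0" using w ex by auto
    then have "(y - w) \<bullet> (y - w) = 0" by (simp add: algebra_simps inner_diff_left inner_diff_right)
    then show "w = y" by simp
  qed
qed

lemma proj_props:
  fixes G :: "'a::euclidean_space set"
  assumes "subspace G"
  shows "proj_onto G v \<in> G" "\<And>u. u \<in> G \<Longrightarrow> (v - proj_onto G v) \<bullet> u = 0"
  using theI'[OF proj_ex1[OF assms, of v]] unfolding proj_onto_def by auto

lemma proj_unique:
  fixes G :: "'a::euclidean_space set"
  assumes "subspace G" "w \<in> G" "\<And>u. u \<in> G \<Longrightarrow> (v - w) \<bullet> u = 0"
  shows "proj_onto G v = w"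
  using the1_equality[OF proj_ex1[OF assms(1), of v]] assms unfolding proj_onto_def by auto

lemma proj_add:
  fixes G :: "'a::euclidean_space set"
  assumes "subspace G"
  shows "proj_onto G (v1 + v2) = proj_onto G v1 + proj_onto G v2"
proof (rule proj_unique[OF assms])
  show "proj_onto G v1 + proj_onto G v2 \<in> G" using proj_props[OF assms] assms by (simp add: subspace_add)
  fix u assume u: "u \<in> G"
  have "(v1 + v2 - (proj_onto G v1 + proj_onto G v2)) = (v1 - proj_onto G v1) + (v2 - proj_onto G v2)"
    by simp
  then show "(v1 + v2 - (proj_onto G v1 + proj_onto G v2)) \<bullet> u = 0"
    using proj_props(2)[OF assms u, of v1] proj_props(2)[OF assms u, of v2] by (simp only: inner_add_left)
qed

lemma proj_scale:
  fixes G :: "'a::euclidean_space set"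
  assumes "subspace G"
  shows "proj_onto G (c *\<^sub>R v) = c *\<^sub>R proj_onto G v"
proof (rule proj_unique[OF assms])
  show "c *\<^sub>R proj_onto G v \<in> G" using proj_props[OF assms] assms by (simp add: subspace_scale)
  fix u assume "u \<in> G"
  then have "(v - proj_onto G v) \<bullet> u = 0" using proj_props[OF assms] by auto
  then show "(c *\<^sub>R v - c *\<^sub>R proj_onto G v) \<bullet> u = 0"
    by (metis inner_scaleR_left mult_zero_right scaleR_right_diff_distrib)
qed

lemma proj_zero:
  fixes G :: "'a::euclidean_space set"
  assumes "subspace G" "\<And>u. u \<in> G \<Longrightarrow> v \<bullet> u = 0"
  shows "proj_onto G v = 0"
  by (rule proj_unique) (use assms in \<open>auto simp: subspace_0\<close>)

lemma proj_dot:
  fixes G :: "'a::euclidean_space set"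
  assumes "subspace G" "g \<in> G"
  shows "v \<bullet> g = proj_onto G v \<bullet> g"
  using proj_props(2)[OF assms] by (simp add: inner_diff_left)

lemma proj_norm_le:
  fixes G :: "'a::euclidean_space set"
  assumes "subspace G"
  shows "norm (proj_onto G v) \<le> norm v"
proof -
  let ?p = "proj_onto G v"
  have o: "(v - ?p) \<bullet> ?p = 0" using proj_props[OF assms] by auto
  have "v \<bullet> v = ?p \<bullet> ?p + (v - ?p) \<bullet> (v - ?p)"
    using o by (simp add: inner_diff_left inner_diff_right inner_commute algebra_simps)
  then have "?p \<bullet> ?p \<le> v \<bullet> v" by (simp add: add_increasing2)
  then show ?thesis by (simp add: norm_eq_sqrt_inner)
qed

lemma subspace_orth_compl_in:
  fixes T :: "'a::euclidean_space set"
  assumes "subspace T"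
  shows "subspace (orth_compl_in T F)"
  using assms unfolding subspace_def orth_compl_in_def
  by (auto simp: inner_add_right)

lemma orth_compl_in_sub: "orth_compl_in T F \<subseteq> T"
  unfolding orth_compl_in_def by auto

lemma in_F_if_orth:
  fixes T :: "'a::euclidean_space set"
  assumes "subspace T" "subspace F" "F \<subseteq> T" "u \<in> T" "\<And>g. g \<in> orth_compl_in T F \<Longrightarrow> u \<bullet> g = 0"
  shows "u \<in> F"
proof -
  let ?p = "proj_onto F u"
  have p: "?p \<in> F" "\<And>e. e \<in> F \<Longrightarrow> (u - ?p) \<bullet> e = 0" using proj_props[OF assms(2)] by auto
  have "u - ?p \<in> orth_compl_in T F"
    unfolding orth_compl_in_def using p assms by (auto simp: subspace_diff inner_commute)
  then have "u \<bullet> (u - ?p) = 0" using assms by auto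
  moreover have "?p \<bullet> (u - ?p) = 0" using p by (simp add: inner_commute)
  ultimately have "(u - ?p) \<bullet> (u - ?p) = 0" by (simp add: inner_diff_left)
  then have "u = ?p" by simp
  then show ?thesis using p by simp
qed

lemma exists_orth_nonzero:
  fixes T :: "'a::euclidean_space set"
  assumes "subspace T" "subspace E" "E \<subseteq> T" "dim E < dim T"
  shows "\<exists>v\<in>orth_compl_in T E. v \<noteq> 0"
proof (rule ccontr)
  assume "\<not> ?thesis"
  then have z: "\<And>v. v \<in> orth_compl_in T E \<Longrightarrow> v = 0" by auto
  have "T \<subseteq> E"
  proof
    fix t assume t: "t \<in> T"
    show "t \<in> E"
      by (rule in_F_if_orth[OF assms(1,2,3) t]) (metis z inner_zero_right)
  qed
  then have "dim T \<le> dim E" by (simp add: dim_subset)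
  then show False using assms by simp
qed

lemma unit_vecs_ne:
  fixes G :: "'a::euclidean_space set"
  assumes "subspace G" "v \<in> G" "v \<noteq> 0"
  shows "unit_vecs G \<noteq> {}"
proof -
  have "(1 / norm v) *\<^sub>R v \<in> unit_vecs G"
    unfolding unit_vecs_def using assms by (auto simp: subspace_scale)
  then show ?thesis by auto
qed

lemma unit_vecs_ne_dim:
  fixes G :: "'a::euclidean_space set"
  assumes "subspace G" "dim G \<ge> 1"
  shows "unit_vecs G \<noteq> {}"
proof -
  have "\<exists>v\<in>G. v \<noteq> 0"
  proof (rule ccontr)
    assume "\<not> ?thesis"
    then have "G \<subseteq> {0}" by auto
    from dim_subset[OF this] have "dim G = 0" by simp
    with assms(2) show False by simp
  qed
  then show ?thesis using unit_vecs_ne[OF assms(1)] by blast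
qed

definition ST :: "'a::euclidean_space set \<Rightarrow> 'a set \<Rightarrow> 'a set \<Rightarrow> ('a \<Rightarrow> 'a) \<Rightarrow> real" where
  "ST T T' E A = (SUP v\<in>unit_vecs (orth_compl_in T E). norm (proj_onto (orth_compl_in T' (A ` E)) (A v)))"

definition IA :: "'a::euclidean_space set \<Rightarrow> ('a \<Rightarrow> 'a) \<Rightarrow> real" where
  "IA E A = (INF u\<in>unit_vecs E. norm (A u))"

lemma ST_bdd:
  fixes A :: "'a::euclidean_space \<Rightarrow> 'a"
  assumes "linear A" "subspace T'"
  shows "bdd_above ((\<lambda>v. norm (proj_onto (orth_compl_in T' F) (A v))) ` unit_vecs X)"
proof -
  obtain c where c: "c > 0" "\<And>x. norm (A x) \<le> c * norm x"
    using linear_bounded_pos[OF assms(1)] by blast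
  have "norm (proj_onto (orth_compl_in T' F) (A v)) \<le> c" if "v \<in> unit_vecs X" for v
  proof -
    have "norm (proj_onto (orth_compl_in T' F) (A v)) \<le> norm (A v)"
      by (rule proj_norm_le[OF subspace_orth_compl_in[OF assms(2)]])
    also have "\<dots> \<le> c" using c(2)[of v] that by (simp add: unit_vecs_def)
    finally show ?thesis .
  qed
  then show ?thesis by (rule bdd_aboveI2)
qed

lemma ST_upper:
  fixes A :: "'a::euclidean_space \<Rightarrow> 'a"
  assumes "linear A" "subspace T'" "v \<in> unit_vecs (orth_compl_in T E)"
  shows "norm (proj_onto (orth_compl_in T' (A ` E)) (A v)) \<le> ST T T' E A"
  unfolding ST_def by (rule cSUP_upper[OF assms(3) ST_bdd[OF assms(1,2)]])

lemma ST_nonneg: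
  fixes A :: "'a::euclidean_space \<Rightarrow> 'a"
  assumes "linear A" "subspace T'" "unit_vecs (orth_compl_in T E) \<noteq> {}"
  shows "0 \<le> ST T T' E A"
proof -
  obtain v where "v \<in> unit_vecs (orth_compl_in T E)" using assms by blast
  from ST_upper[OF assms(1,2) this] show ?thesis by (meson norm_ge_zero order_trans)
qed

lemma ST_le:
  fixes A :: "'a::euclidean_space \<Rightarrow> 'a"
  assumes "unit_vecs (orth_compl_in T E) \<noteq> {}"
    and "\<And>v. v \<in> unit_vecs (orth_compl_in T E) \<Longrightarrow> norm (proj_onto (orth_compl_in T' (A ` E)) (A v)) \<le> c"
  shows "ST T T' E A \<le> c"
  unfolding ST_def by (rule cSUP_least[OF assms])

lemma ST_cocycle:
  fixes A B :: "'a::euclidean_space \<Rightarrow> 'a"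
  assumes T: "subspace T" "subspace T'" "subspace T''" "subspace E" "E \<subseteq> T"
    and lin: "linear A" "linear B" and AT: "A ` T \<subseteq> T'" and BT: "B ` T' \<subseteq> T''"
    and ne1: "unit_vecs (orth_compl_in T E) \<noteq> {}"
    and ne2: "unit_vecs (orth_compl_in T' (A ` E)) \<noteq> {}"
  shows "ST T T'' E (B \<circ> A) \<le> ST T T' E A * ST T' T'' (A ` E) B"
proof (rule ST_le[OF ne1])
  fix v assume v: "v \<in> unit_vecs (orth_compl_in T E)"
  define G' where "G' = orth_compl_in T' (A ` E)"
  define G'' where "G'' = orth_compl_in T'' (B ` A ` E)"
  have sG': "subspace G'" unfolding G'_def by (rule subspace_orth_compl_in[OF T(2)])
  have sG'': "subspace G''" unfolding G''_def by (rule subspace_orth_compl_in[OF T(3)])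
  have sAE: "subspace (A ` E)" by (rule linear_subspace_image[OF lin(1) T(4)])
  have AEsub: "A ` E \<subseteq> T'" using AT T(5) by blast
  have vT: "v \<in> T" using v unfolding unit_vecs_def orth_compl_in_def by auto
  have AvT: "A v \<in> T'" using AT vT by blast
  define w where "w = proj_onto G' (A v)"
  have wG: "w \<in> G'" unfolding w_def by (rule proj_props(1)[OF sG'])
  have wT: "w \<in> T'" using wG unfolding G'_def orth_compl_in_def by auto
  have "A v - w \<in> A ` E"
  proof (rule in_F_if_orth[OF T(2) sAE AEsub])
    show "A v - w \<in> T'" using AvT wT T(2) by (simp add: subspace_diff)
    fix g assume "g \<in> orth_compl_in T' (A ` E)"
    then show "(A v - w) \<bullet> g = 0" using proj_props(2)[OF sG'] unfolding w_def G'_def by auto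
  qed
  then have "B (A v - w) \<in> B ` A ` E" by blast
  then have z: "proj_onto G'' (B (A v - w)) = 0"
    by (intro proj_zero[OF sG'']) (auto simp: G''_def orth_compl_in_def)
  have "B (A v) = B w + B (A v - w)" using linear_diff[OF lin(2)] by simp
  then have eq: "proj_onto G'' (B (A v)) = proj_onto G'' (B w)"
    using proj_add[OF sG''] z by simp
  have STA: "norm w \<le> ST T T' E A" unfolding w_def G'_def by (rule ST_upper[OF lin(1) T(2) v])
  have STB0: "0 \<le> ST T' T'' (A ` E) B" by (rule ST_nonneg[OF lin(2) T(3) ne2])
  have STA0: "0 \<le> ST T T' E A" by (rule ST_nonneg[OF lin(1) T(2) ne1])
  have main: "norm (proj_onto G'' (B w)) \<le> ST T T' E A * ST T' T'' (A ` E) B"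
  proof (cases "w = 0")
    case True
    then show ?thesis using linear_0[OF lin(2)] proj_zero[OF sG'', of 0] STA0 STB0 by simp
  next
    case False
    define u where "u = (1 / norm w) *\<^sub>R w"
    have u: "u \<in> unit_vecs G'" unfolding u_def unit_vecs_def using False wG sG' by (simp add: subspace_scale)
    have wu: "w = norm w *\<^sub>R u" unfolding u_def using False by simp
    have "proj_onto G'' (B w) = norm w *\<^sub>R proj_onto G'' (B u)"
      by (subst wu, simp add: linear_scale[OF lin(2)] proj_scale[OF sG''])
    then have "norm (proj_onto G'' (B w)) = norm w * norm (proj_onto G'' (B u))" by simp
    also have "\<dots> \<le> norm w * ST T' T'' (A ` E) B"
      using ST_upper[OF lin(2) T(3) u[unfolded G'_def]] by (simp add: G''_def mult_left_mono image_comp)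
    also have "\<dots> \<le> ST T T' E A * ST T' T'' (A ` E) B"
      by (rule mult_right_mono[OF STA STB0])
    finally show ?thesis .
  qed
  show "norm (proj_onto (orth_compl_in T'' ((B \<circ> A) ` E)) ((B \<circ> A) v)) \<le> ST T T' E A * ST T' T'' (A ` E) B"
    using eq main by (simp add: G''_def image_comp)
qed

lemma ST_lower:
  fixes A A' :: "'a::euclidean_space \<Rightarrow> 'a"
  assumes T: "subspace T" "subspace T'" "subspace E" "E \<subseteq> T"
    and lin: "linear A" "linear A'" and AT: "A ` T \<subseteq> T'"
    and inv: "\<And>u. u \<in> T \<Longrightarrow> A' (A u) = u"
    and c: "c > 0" "\<And>y. norm (A' y) \<le> c * norm y"
    and ne1: "unit_vecs (orth_compl_in T E) \<noteq> {}"
  shows "1 / c \<le> ST T T' E A"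
proof -
  obtain v where v: "v \<in> unit_vecs (orth_compl_in T E)" using ne1 by blast
  define G' where "G' = orth_compl_in T' (A ` E)"
  have sG': "subspace G'" unfolding G'_def by (rule subspace_orth_compl_in[OF T(2)])
  have sAE: "subspace (A ` E)" by (rule linear_subspace_image[OF lin(1) T(3)])
  have AEsub: "A ` E \<subseteq> T'" using AT T(4) by blast
  have vT: "v \<in> T" and vn: "norm v = 1" and vE: "\<And>e. e \<in> E \<Longrightarrow> e \<bullet> v = 0"
    using v unfolding unit_vecs_def orth_compl_in_def by auto
  have AvT: "A v \<in> T'" using AT vT by blast
  define z where "z = proj_onto G' (A v)"
  have zG: "z \<in> G'" unfolding z_def by (rule proj_props(1)[OF sG'])
  have zT: "z \<in> T'" using zG unfolding G'_def orth_compl_in_def by auto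
  have "A v - z \<in> A ` E"
  proof (rule in_F_if_orth[OF T(2) sAE AEsub])
    show "A v - z \<in> T'" using AvT zT T(2) by (simp add: subspace_diff)
    fix g assume "g \<in> orth_compl_in T' (A ` E)"
    then show "(A v - z) \<bullet> g = 0" using proj_props(2)[OF sG'] unfolding z_def G'_def by auto
  qed
  then obtain e where e: "e \<in> E" "A v - z = A e" by auto
  have "v = A' (A v)" using inv vT by simp
  also have "\<dots> = A' (A e + z)" using e by (metis diff_add_cancel)
  also have "\<dots> = e + A' z" using inv e T(4) linear_add[OF lin(2)] by auto
  finally have veq: "v = e + A' z" .
  have "1 = v \<bullet> v" using vn by (simp add: norm_eq_1)
  also have "\<dots> = v \<bullet> e + v \<bullet> A' z" by (subst (2) veq) (simp add: inner_add_right)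
  also have "v \<bullet> e = 0" using vE[OF e(1)] by (simp add: inner_commute)
  finally have "1 = v \<bullet> A' z" by simp
  also have "\<dots> \<le> norm v * norm (A' z)" by (rule Cauchy_Schwarz_ineq2[THEN order_trans[OF abs_ge_self]])
  also have "\<dots> \<le> c * norm z" using c(2)[of z] vn by simp
  finally have "1 / c \<le> norm z" using c(1) by (simp add: field_simps)
  also have "norm z \<le> ST T T' E A" unfolding z_def G'_def by (rule ST_upper[OF lin(1) T(2) v])
  finally show ?thesis .
qed

lemma ST_upper_bound:
  fixes A :: "'a::euclidean_space \<Rightarrow> 'a"
  assumes "subspace T'" "linear A" "\<And>y. norm (A y) \<le> c * norm y"
    and ne1: "unit_vecs (orth_compl_in T E) \<noteq> {}"
  shows "ST T T' E A \<le> c"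
proof (rule ST_le[OF ne1])
  fix v assume "v \<in> unit_vecs (orth_compl_in T E)"
  then have "norm v = 1" by (simp add: unit_vecs_def)
  have "norm (proj_onto (orth_compl_in T' (A ` E)) (A v)) \<le> norm (A v)"
    by (rule proj_norm_le[OF subspace_orth_compl_in[OF assms(1)]])
  also have "\<dots> \<le> c" using assms(3)[of v] \<open>norm v = 1\<close> by simp
  finally show "norm (proj_onto (orth_compl_in T' (A ` E)) (A v)) \<le> c" .
qed

lemma IA_bdd: "bdd_below ((\<lambda>u. norm (A u)) ` X)"
  by (auto intro: bdd_belowI2[of _ 0])

lemma IA_lower_elem:
  assumes "u \<in> unit_vecs E"
  shows "IA E A \<le> norm (A u)"
  unfolding IA_def by (rule cINF_lower[OF IA_bdd assms])

lemma IA_ge: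
  assumes "unit_vecs E \<noteq> {}" "\<And>u. u \<in> unit_vecs E \<Longrightarrow> c \<le> norm (A u)"
  shows "c \<le> IA E A"
  unfolding IA_def by (rule cINF_greatest[OF assms])

lemma IA_nonneg:
  assumes "unit_vecs E \<noteq> {}"
  shows "0 \<le> IA E A"
  by (rule IA_ge[OF assms]) simp

lemma IA_cocycle:
  fixes A B :: "'a::euclidean_space \<Rightarrow> 'a"
  assumes "subspace E" "linear A" "linear B" "unit_vecs E \<noteq> {}"
    and inj: "\<And>u. u \<in> E \<Longrightarrow> u \<noteq> 0 \<Longrightarrow> A u \<noteq> 0"
  shows "IA E A * IA (A ` E) B \<le> IA E (B \<circ> A)"
proof (rule IA_ge[OF assms(4)])
  fix u assume u: "u \<in> unit_vecs E"
  have uE: "u \<in> E" and un: "norm u = 1" using u by (auto simp: unit_vecs_def)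
  have "u \<noteq> 0" using un by auto
  then have Au: "A u \<noteq> 0" using inj uE by blast
  define u' where "u' = (1 / norm (A u)) *\<^sub>R A u"
  have "(1 / norm (A u)) *\<^sub>R u \<in> E" using uE assms(1) by (simp add: subspace_scale)
  then have "u' \<in> A ` E" unfolding u'_def by (metis image_eqI linear_scale[OF assms(2)])
  moreover have "norm u' = 1" unfolding u'_def using Au by simp
  ultimately have u': "u' \<in> unit_vecs (A ` E)" unfolding unit_vecs_def by simp
  have IB0: "0 \<le> IA (A ` E) B" using IA_nonneg u' by blast
  have "IA E A * IA (A ` E) B \<le> norm (A u) * IA (A ` E) B"
    by (rule mult_right_mono[OF IA_lower_elem[OF u] IB0])
  also have "\<dots> \<le> norm (A u) * norm (B u')"
    by (rule mult_left_mono[OF IA_lower_elem[OF u']]) simp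
  also have "norm (A u) * norm (B u') = norm (B (A u))"
    unfolding u'_def using Au by (simp add: linear_scale[OF assms(3)])
  finally show "IA E A * IA (A ` E) B \<le> norm ((B \<circ> A) u)" by simp
qed

lemma IA_lower:
  fixes A A' :: "'a::euclidean_space \<Rightarrow> 'a"
  assumes "unit_vecs E \<noteq> {}" "\<And>u. u \<in> E \<Longrightarrow> A' (A u) = u"
    and c: "c > 0" "\<And>y. norm (A' y) \<le> c * norm y"
  shows "1 / c \<le> IA E A"
proof (rule IA_ge[OF assms(1)])
  fix u assume u: "u \<in> unit_vecs E"
  then have "1 = norm (A' (A u))" using assms(2) by (auto simp: unit_vecs_def)
  also have "\<dots> \<le> c * norm (A u)" by (rule c(2))
  finally show "1 / c \<le> norm (A u)" using c(1) by (simp add: field_simps)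
qed

lemma IA_upper:
  assumes "unit_vecs E \<noteq> {}" "\<And>y. norm (A y) \<le> c * norm y"
  shows "IA E A \<le> c"
proof -
  obtain u where u: "u \<in> unit_vecs E" using assms by blast
  then have "IA E A \<le> norm (A u)" by (rule IA_lower_elem)
  also have "\<dots> \<le> c" using assms(2)[of u] u by (simp add: unit_vecs_def)
  finally show ?thesis .
qed

definition words :: "nat \<Rightarrow> nat \<Rightarrow> nat list set" where
  "words k n = {xs. length xs = n \<and> set xs \<subseteq> {1..k}}"

definition pre :: "nat \<Rightarrow> (int \<Rightarrow> nat) \<Rightarrow> nat list" where
  "pre n \<omega> = map (\<lambda>j. \<omega> (int j)) [0..<n]"

definition avg :: "nat \<Rightarrow> nat \<Rightarrow> (nat list \<Rightarrow> real) \<Rightarrow> real" where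
  "avg k n G = (\<Sum>xs\<in>words k n. G xs) / real k ^ n"

lemma finite_words: "finite (words k n)"
proof -
  have "words k n \<subseteq> {xs. set xs \<subseteq> {1..k} \<and> length xs = n}" unfolding words_def by auto
  then show ?thesis using finite_lists_length_eq[of "{1..k}" n] finite_subset by blast
qed

lemma words_Suc: "words k (Suc n) = (\<lambda>(a, xs). a # xs) ` ({1..k} \<times> words k n)"
  unfolding words_def by (auto simp: length_Suc_conv image_iff)

lemma card_words: "card (words k n) = k ^ n"
proof (induction n)
  case 0
  have "words k 0 = {[]}" unfolding words_def by auto
  then show ?case by simp
next
  case (Suc n)
  have "inj_on (\<lambda>(a, xs). a # xs) ({1..k} \<times> words k n)" by (auto simp: inj_on_def)
  then have "card (words k (Suc n)) = card ({1..k} \<times> words k n)"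
    unfolding words_Suc by (rule card_image)
  also have "\<dots> = k * k ^ n" using Suc by (simp add: card_cartesian_product)
  finally show ?case by simp
qed

lemma words_append:
  "bij_betw (\<lambda>(xs, ys). xs @ ys) (words k n \<times> words k m) (words k (n + m))"
proof (rule bij_betwI[where g = "\<lambda>zs. (take n zs, drop n zs)"])
  show "(\<lambda>(xs, ys). xs @ ys) \<in> words k n \<times> words k m \<rightarrow> words k (n + m)"
    unfolding words_def by (auto simp: subset_iff)
  show "(\<lambda>zs. (take n zs, drop n zs)) \<in> words k (n + m) \<rightarrow> words k n \<times> words k m"
    unfolding words_def by (auto dest: in_set_takeD in_set_dropD)
  show "(\<lambda>zs. (take n zs, drop n zs)) ((\<lambda>(xs, ys). xs @ ys) p) = p" if "p \<in> words k n \<times> words k m" for p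
    using that unfolding words_def by (cases p) auto
  show "(\<lambda>(xs, ys). xs @ ys) (take n zs, drop n zs) = zs" for zs :: "nat list"
    by simp
qed

lemma sum_words_append:
  "(\<Sum>zs\<in>words k (n + m). G zs) = (\<Sum>xs\<in>words k n. \<Sum>ys\<in>words k m. G (xs @ ys))"
proof -
  have "(\<Sum>zs\<in>words k (n + m). G zs) = (\<Sum>p\<in>words k n \<times> words k m. G ((\<lambda>(xs, ys). xs @ ys) p))"
    by (rule sum.reindex_bij_betw[OF words_append, symmetric])
  also have "\<dots> = (\<Sum>xs\<in>words k n. \<Sum>ys\<in>words k m. G (xs @ ys))"
    by (subst sum.cartesian_product) (simp add: case_prod_beta)
  finally show ?thesis .
qed

lemma avg_append:
  "avg k (n + m) G = avg k n (\<lambda>xs. avg k m (\<lambda>ys. G (xs @ ys)))"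
  unfolding avg_def sum_words_append by (simp add: power_add sum_divide_distrib mult.commute)

lemma avg_mono:
  assumes "\<And>xs. xs \<in> words k n \<Longrightarrow> G xs \<le> H xs"
  shows "avg k n G \<le> avg k n H"
  unfolding avg_def by (intro divide_right_mono sum_mono assms) auto

lemma avg_const:
  assumes "k \<ge> 1"
  shows "avg k n (\<lambda>_. c) = c"
  unfolding avg_def using assms by (simp add: card_words)

lemma avg_mult_const: "avg k n (\<lambda>xs. c * G xs) = c * avg k n G"
  unfolding avg_def by (simp add: sum_distrib_left)

lemma pre_length: "length (pre n \<omega>) = n"
  unfolding pre_def by simp

lemma pre_Suc: "pre (Suc n) \<omega> = pre n \<omega> @ [\<omega> (int n)]"
  unfolding pre_def by simp

lemma pre_eq_iff: "pre n \<omega> = xs \<longleftrightarrow> length xs = n \<and> (\<forall>j<n. \<omega> (int j) = xs ! j)"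
  unfolding pre_def by (auto simp: list_eq_iff_nth_eq)

lemma integral_bernoulli_avg:
  fixes G :: "nat list \<Rightarrow> real"
  assumes k: "k \<ge> 1"
  shows "(\<integral>\<omega>. G (pre n \<omega>) \<partial>bernoulli_space k) = avg k n G"
proof -
  let ?p = "pmf_of_set {1..k::nat}"
  let ?P = "bernoulli_space k"
  have ne: "{1..k} \<noteq> {}" using k by simp
  interpret product_prob_space "\<lambda>_::int. measure_pmf ?p" UNIV
    by unfold_locales
  interpret psP: prob_space ?P unfolding bernoulli_space_def by (intro prob_space_PiM prob_space_measure_pmf)
  have P: "?P = PiM UNIV (\<lambda>_::int. measure_pmf ?p)" unfolding bernoulli_space_def by simp
  have setp: "set_pmf ?p = {1..k}" using ne by simp
  have AEp: "AE x in measure_pmf ?p. x \<in> {1..k}" using AE_measure_pmf[of ?p] unfolding setp .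
  define S where "S xs = {\<omega>\<in>space ?P. pre n \<omega> = xs}" for xs
  have S_alt: "S xs = {\<omega>\<in>space ?P. \<forall>i\<in>int ` {..<n}. \<omega> i \<in> {xs ! nat i}}" if "length xs = n" for xs
    unfolding S_def pre_eq_iff using that by auto
  have S_sets: "S xs \<in> sets ?P" if "length xs = n" for xs
  proof -
    have "Measurable.pred ?P (\<lambda>\<omega>. \<forall>j<n. \<omega> (int j) = xs ! j)"
      unfolding bernoulli_space_def by measurable
    then have A: "{\<omega>\<in>space ?P. \<forall>j<n. \<omega> (int j) = xs ! j} \<in> sets ?P" unfolding pred_def .
    have eq: "S xs = {\<omega>\<in>space ?P. \<forall>j<n. \<omega> (int j) = xs ! j}"
      unfolding S_def pre_eq_iff using that by auto
    show ?thesis unfolding eq by (rule A)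
  qed
  have S_meas: "measure ?P (S xs) = 1 / real k ^ n" if "xs \<in> words k n" for xs
  proof -
    have len: "length xs = n" and xs: "set xs \<subseteq> {1..k}" using that by (auto simp: words_def)
    have "emeasure ?P (S xs) = (\<Prod>i\<in>int ` {..<n}. emeasure (measure_pmf ?p) {xs ! nat i})"
      unfolding S_alt[OF len] P by (rule emeasure_PiM_Collect) auto
    also have "\<dots> = (\<Prod>i\<in>int ` {..<n}. ennreal (1 / real k))"
    proof (rule prod.cong[OF refl])
      fix i assume "i \<in> int ` {..<n}"
      then have "xs ! nat i \<in> {1..k}" using xs len by (auto dest!: nth_mem)
      then show "emeasure (measure_pmf ?p) {xs ! nat i} = ennreal (1 / real k)"
        using ne by (simp add: emeasure_pmf_single pmf_of_set)
    qed
    also have "\<dots> = ennreal ((1 / real k) ^ n)"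
      by (simp add: card_image prod_ennreal[symmetric] ennreal_power)
    finally have "emeasure ?P (S xs) = ennreal ((1 / real k) ^ n)" .
    then show ?thesis by (simp add: measure_def power_one_over)
  qed
  have pre_meas: "pre n \<in> measurable ?P (count_space UNIV)"
  proof (subst measurable_count_space_eq2_countable, intro conjI ballI)
    show "pre n \<in> space ?P \<rightarrow> UNIV" by simp
    fix xs :: "nat list"
    show "pre n -` {xs} \<inter> space ?P \<in> sets ?P"
    proof (cases "length xs = n")
      case True
      then show ?thesis using S_sets[OF True] unfolding S_def by (simp add: Int_def vimage_def conj_commute)
    next
      case False
      then have "pre n -` {xs} \<inter> space ?P = {}" using pre_length by auto
      then show ?thesis by simp
    qed
  qed
  have AEw: "AE \<omega> in ?P. pre n \<omega> \<in> words k n"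
  proof -
    have "AE \<omega> in ?P. \<forall>j\<in>{..<n}. \<omega> (int j) \<in> {1..k}"
    proof (subst AE_finite_all[OF finite_lessThan], rule ballI)
      fix j assume "j \<in> {..<n}"
      show "AE \<omega> in ?P. \<omega> (int j) \<in> {1..k}"
        unfolding P by (rule AE_component) (use AEp in auto)
    qed
    then show ?thesis by eventually_elim (auto simp: words_def pre_def)
  qed
  have eqAE: "AE \<omega> in ?P. G (pre n \<omega>) = (\<Sum>xs\<in>words k n. G xs * indicator (S xs) \<omega>)"
    using AEw
  proof eventually_elim
    case (elim \<omega>)
    have "(\<Sum>xs\<in>words k n. G xs * indicator (S xs) \<omega>) = (\<Sum>xs\<in>{pre n \<omega>}. G xs * indicator (S xs) \<omega>)"
    proof (rule sum.mono_neutral_right)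
      show "\<forall>i\<in>words k n - {pre n \<omega>}. G i * indicator (S i) \<omega> = 0" unfolding S_def by auto
    qed (use elim finite_words in auto)
    also have "\<dots> = G (pre n \<omega>)"
      unfolding S_def by (simp add: indicator_def space_PiM bernoulli_space_def)
    finally show ?case by simp
  qed
  have "(\<integral>\<omega>. G (pre n \<omega>) \<partial>?P) = (\<integral>\<omega>. (\<Sum>xs\<in>words k n. G xs * indicator (S xs) \<omega>) \<partial>?P)"
  proof (rule integral_cong_AE)
    show "(\<lambda>\<omega>. G (pre n \<omega>)) \<in> borel_measurable ?P"
      using measurable_compose[OF pre_meas, of G borel] by simp
    show "(\<lambda>\<omega>. \<Sum>xs\<in>words k n. G xs * indicator (S xs) \<omega>) \<in> borel_measurable ?P"
      using S_sets by (auto simp: words_def intro!: borel_measurable_sum borel_measurable_times borel_measurable_indicator)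
  qed (rule eqAE)
  also have "\<dots> = (\<Sum>xs\<in>words k n. \<integral>\<omega>. G xs * indicator (S xs) \<omega> \<partial>?P)"
  proof (rule Bochner_Integration.integral_sum[where I="words k n" and f="\<lambda>xs \<omega>. G xs * indicator (S xs) \<omega>"])
    show "integrable ?P (\<lambda>\<omega>. G xs * indicator (S xs) \<omega>)" if "xs \<in> words k n" for xs
      using S_sets that psP.emeasure_finite by (auto simp: words_def less_top[symmetric] intro!: integrable_mult_right integrable_real_indicator)
  qed
  also have "\<dots> = (\<Sum>xs\<in>words k n. G xs * measure ?P (S xs))"
    using S_sets by (intro sum.cong refl) (auto simp: words_def)
  also have "\<dots> = (\<Sum>xs\<in>words k n. G xs / real k ^ n)"
    by (intro sum.cong refl) (simp add: S_meas)
  also have "\<dots> = avg k n G" unfolding avg_def by (simp add: sum_divide_distrib)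
  finally show ?thesis .
qed

lemma has_derivative_left_inverse_comp:
  fixes f :: "'a::real_normed_vector \<Rightarrow> 'b::real_normed_vector"
    and g :: "'c::real_normed_vector \<Rightarrow> 'a" and h :: "'c \<Rightarrow> 'b"
  assumes derf: "(f has_derivative f') (at (g y))"
    and lg': "bounded_linear g'" and inv: "\<And>x. g' (f' x) = x"
    and contg: "continuous (at y) g" and T: "open T" "y \<in> T"
    and fg: "\<And>z. z \<in> T \<Longrightarrow> f (g z) = h z"
    and derh: "(h has_derivative h') (at y)"
  shows "(g has_derivative (\<lambda>z. g' (h' z))) (at y)"
proof -
  interpret f': bounded_linear f' using derf unfolding has_derivative_def by auto
  interpret g': bounded_linear g' using lg' .
  have lh': "bounded_linear h'" using derh unfolding has_derivative_def by auto
  interpret h': bounded_linear h' using lh' .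
  obtain C where C: "0 < C" "\<And>x. norm (g' x) \<le> norm x * C"
    using g'.pos_bounded by blast
  obtain H where H: "0 < H" "\<And>x. norm (h' x) \<le> norm x * H"
    using h'.pos_bounded by blast
  have fy: "f (g y) = h y" using fg T by auto
  have lem1: "\<exists>d>0. \<forall>z. norm (z - y) < d \<longrightarrow>
      norm (g z - g y - g' (h' (z - y))) \<le> e * (norm (g z - g y) + norm (z - y))" if "e > 0" for e
  proof -
    have eC: "e / C > 0" using that C by simp
    obtain d0 where "0 < d0" and d0:
        "\<And>u. norm (u - g y) < d0 \<Longrightarrow> norm (f u - f (g y) - f' (u - g y)) \<le> e / C * norm (u - g y)"
      using derf eC unfolding has_derivative_at_alt by blast
    obtain d1 where "0 < d1" and d1: "\<And>x. dist x y < d1 \<Longrightarrow> dist (g x) (g y) < d0"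
      using contg \<open>0 < d0\<close> unfolding continuous_at_eps_delta by blast
    obtain d2 where "0 < d2" and d2: "\<And>u. dist u y < d2 \<Longrightarrow> u \<in> T"
      using T unfolding open_dist by blast
    obtain d3 where "0 < d3" and d3:
        "\<And>z. norm (z - y) < d3 \<Longrightarrow> norm (h z - h y - h' (z - y)) \<le> e / C * norm (z - y)"
      using derh eC unfolding has_derivative_at_alt by blast
    define d where "d = min d1 (min d2 d3)"
    have "d > 0" using \<open>0 < d1\<close> \<open>0 < d2\<close> \<open>0 < d3\<close> by (simp add: d_def)
    show ?thesis
    proof (intro exI[of _ d] conjI allI impI \<open>d > 0\<close>)
      fix z assume z: "norm (z - y) < d"
      then have zT: "z \<in> T" using d2 by (simp add: d_def dist_norm)
      have gz: "norm (g z - g y) < d0" using d1[of z] z by (simp add: d_def dist_norm)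
      define R1 where "R1 = f (g z) - f (g y) - f' (g z - g y)"
      define R2 where "R2 = h z - h y - h' (z - y)"
      have R1: "norm R1 \<le> e / C * norm (g z - g y)" unfolding R1_def using d0[OF gz] by simp
      have R2: "norm R2 \<le> e / C * norm (z - y)" unfolding R2_def using d3 z by (simp add: d_def)
      have "g z - g y = g' (f' (g z - g y))" by (simp add: inv)
      also have "f' (g z - g y) = h' (z - y) + R2 - R1"
        unfolding R1_def R2_def using fg[OF zT] fy by (simp add: algebra_simps)
      finally have "g z - g y - g' (h' (z - y)) = g' (R2 - R1)"
        by (simp add: g'.add g'.diff)
      then have "norm (g z - g y - g' (h' (z - y))) \<le> norm (R2 - R1) * C" using C(2) by simp
      also have "\<dots> \<le> (norm R2 + norm R1) * C"
        using C(1) norm_triangle_ineq4[of R2 R1] by (simp add: mult_right_mono)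
      also have "\<dots> \<le> (e / C * norm (z - y) + e / C * norm (g z - g y)) * C"
        using R1 R2 C(1) by (intro mult_right_mono add_mono) auto
      also have "\<dots> = e * (norm (g z - g y) + norm (z - y))"
        using C(1) by (simp add: field_simps)
      finally show "norm (g z - g y - g' (h' (z - y))) \<le> e * (norm (g z - g y) + norm (z - y))" .
    qed
  qed
  obtain d where "0 < d" and d:
      "\<And>z. norm (z - y) < d \<Longrightarrow> norm (g z - g y - g' (h' (z - y))) \<le> 1/2 * (norm (g z - g y) + norm (z - y))"
    using lem1[of "1/2"] by auto
  define B where "B = 2 * C * H + 1"
  have "B > 0" unfolding B_def using C(1) H(1) by (simp add: add_pos_pos)
  have lem2: "norm (g z - g y) \<le> B * norm (z - y)" if z: "norm (z - y) < d" for z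
  proof -
    have "norm (g z - g y) \<le> norm (g' (h' (z - y))) + norm (g z - g y - g' (h' (z - y)))"
      by (rule norm_triangle_sub)
    also have "\<dots> \<le> norm (z - y) * H * C + 1/2 * (norm (g z - g y) + norm (z - y))"
    proof (rule add_mono)
      have "norm (g' (h' (z - y))) \<le> norm (h' (z - y)) * C" by (rule C(2))
      also have "\<dots> \<le> norm (z - y) * H * C" using H(2)[of "z - y"] C(1) by (simp add: mult_right_mono)
      finally show "norm (g' (h' (z - y))) \<le> norm (z - y) * H * C" .
    qed (rule d[OF z])
    finally show ?thesis unfolding B_def by (simp add: field_simps)
  qed
  show ?thesis
    unfolding has_derivative_at_alt
  proof (intro conjI allI impI)
    show "bounded_linear (\<lambda>z. g' (h' z))"
      using bounded_linear_compose[OF lg' lh'] by (simp add: o_def)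
    fix e :: real assume "e > 0"
    then have e': "e / (B + 1) > 0" using \<open>B > 0\<close> by simp
    obtain d' where "0 < d'" and d':
        "\<And>z. norm (z - y) < d' \<Longrightarrow> norm (g z - g y - g' (h' (z - y))) \<le> e / (B + 1) * (norm (g z - g y) + norm (z - y))"
      using lem1[OF e'] by blast
    show "\<exists>d>0. \<forall>z. norm (z - y) < d \<longrightarrow> norm (g z - g y - g' (h' (z - y))) \<le> e * norm (z - y)"
    proof (intro exI[of _ "min d d'"] conjI allI impI)
      show "min d d' > 0" using \<open>0 < d\<close> \<open>0 < d'\<close> by simp
      fix z assume z: "norm (z - y) < min d d'"
      have "norm (g z - g y - g' (h' (z - y))) \<le> e / (B + 1) * (norm (g z - g y) + norm (z - y))"
        using d' z by simp
      also have "\<dots> \<le> e / (B + 1) * (B * norm (z - y) + norm (z - y))"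
        using lem2[of z] z e' by (intro mult_left_mono add_right_mono) auto
      also have "\<dots> = e * norm (z - y)" using \<open>B > 0\<close> by (simp add: field_simps)
      finally show "norm (g z - g y - g' (h' (z - y))) \<le> e * norm (z - y)" .
    qed
  qed
qed

lemma tangent_space_chart:
  fixes \<phi> :: "'m::euclidean_space \<Rightarrow> 'a::euclidean_space"
    and D :: "'m \<Rightarrow> ('m \<Rightarrow>\<^sub>L 'a)"
  assumes U: "open U" and W: "open W" and hom: "homeomorphism W (M \<inter> U) \<phi> \<psi>"
    and der: "\<And>w. w \<in> W \<Longrightarrow> (\<phi> has_derivative blinfun_apply (D w)) (at w) \<and> inj (blinfun_apply (D w))"
    and w0: "w0 \<in> W"
  shows "tangent_space M (\<phi> w0) = range (blinfun_apply (D w0))"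
proof -
  have hom1: "\<And>w. w \<in> W \<Longrightarrow> \<psi> (\<phi> w) = w" and hom2: "\<phi> ` W = M \<inter> U"
    and hom3: "\<And>y. y \<in> M \<inter> U \<Longrightarrow> \<phi> (\<psi> y) = y" and hom4: "\<psi> ` (M \<inter> U) = W"
    and hom5: "continuous_on (M \<inter> U) \<psi>"
    using hom unfolding homeomorphism_def by auto
  let ?x = "\<phi> w0"
  have xMU: "?x \<in> M \<inter> U" using hom2 w0 by blast
  have derw0: "(\<phi> has_derivative blinfun_apply (D w0)) (at w0)" using der w0 by blast
  show ?thesis
  proof
    show "range (blinfun_apply (D w0)) \<subseteq> tangent_space M ?x"
    proof
      fix v assume "v \<in> range (blinfun_apply (D w0))"
      then obtain u where v: "v = D w0 u" by auto
      define \<gamma> where "\<gamma> t = (if w0 + t *\<^sub>R u \<in> W then \<phi> (w0 + t *\<^sub>R u) else ?x)" for t :: real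
      have \<gamma>M: "\<gamma> t \<in> M" for t unfolding \<gamma>_def using hom2 xMU by auto
      have \<gamma>0: "\<gamma> 0 = ?x" unfolding \<gamma>_def using w0 by simp
      have d1: "((\<lambda>t::real. w0 + t *\<^sub>R u) has_derivative (\<lambda>t. t *\<^sub>R u)) (at 0)"
        by (auto intro!: derivative_eq_intros)
      have "((\<lambda>t::real. \<phi> (w0 + t *\<^sub>R u)) has_derivative (\<lambda>t. D w0 (t *\<^sub>R u))) (at 0)"
        using has_derivative_compose[OF d1, of \<phi> "blinfun_apply (D w0)"] derw0 by simp
      then have "((\<lambda>t::real. \<phi> (w0 + t *\<^sub>R u)) has_vector_derivative v) (at 0)"
        unfolding has_vector_derivative_def v by (simp add: blinfun.scaleR_right)
      moreover have "open {t::real. w0 + t *\<^sub>R u \<in> W}"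
      proof -
        have "continuous_on UNIV (\<lambda>t::real. w0 + t *\<^sub>R u)" by (intro continuous_intros)
        from open_vimage[OF W this] show ?thesis by (simp add: vimage_def)
      qed
      ultimately have "(\<gamma> has_vector_derivative v) (at 0)"
        by (rule has_vector_derivative_transform_within_open) (auto simp: \<gamma>_def w0)
      then show "v \<in> tangent_space M ?x"
        unfolding tangent_space_def using \<gamma>M \<gamma>0 by blast
    qed
  next
    show "tangent_space M ?x \<subseteq> range (blinfun_apply (D w0))"
    proof
      fix v assume "v \<in> tangent_space M ?x"
      then obtain \<gamma> :: "real \<Rightarrow> 'a" where \<gamma>M: "\<And>t. \<gamma> t \<in> M" and \<gamma>0: "\<gamma> 0 = ?x"
        and d\<gamma>: "(\<gamma> has_vector_derivative v) (at 0)"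
        unfolding tangent_space_def by blast
      have lin: "linear (blinfun_apply (D w0))" by (simp add: blinfun.bounded_linear_right bounded_linear.linear)
      have injD: "inj (blinfun_apply (D w0))" using der w0 by blast
      obtain L where L: "linear L" "L \<circ> blinfun_apply (D w0) = id"
        using linear_injective_left_inverse[OF lin injD] by blast
      have bL: "bounded_linear L" using L(1) by (simp add: linear_conv_bounded_linear)
      have Linv: "L (D w0 z) = z" for z using L(2) by (metis comp_apply id_apply)
      have cont\<gamma>: "continuous (at 0) \<gamma>" using has_vector_derivative_continuous[OF d\<gamma>] .
      obtain \<delta> where \<delta>: "\<delta> > 0" "\<And>t. dist t 0 < \<delta> \<Longrightarrow> \<gamma> t \<in> U"
      proof -
        obtain e where "e > 0" "ball ?x e \<subseteq> U" using U xMU open_contains_ball by blast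
        moreover obtain d where "d > 0" "\<And>t. dist t 0 < d \<Longrightarrow> dist (\<gamma> t) (\<gamma> 0) < e"
          using cont\<gamma> \<open>e > 0\<close> unfolding continuous_at_eps_delta by blast
        ultimately show thesis using that[of d] \<gamma>0 by (auto simp: dist_commute subset_iff)
      qed
      define c where "c t = \<psi> (\<gamma> t)" for t
      have c0: "c 0 = w0" unfolding c_def \<gamma>0 using hom1 w0 by simp
      have ev: "eventually (\<lambda>t. \<gamma> t \<in> M \<inter> U) (at 0)"
        using \<delta> \<gamma>M unfolding eventually_at by (auto intro!: exI[of _ \<delta>])
      have "((\<lambda>t. \<psi> (\<gamma> t)) \<longlongrightarrow> \<psi> ?x) (at 0)"
        by (rule continuous_within_tendsto_compose[OF _ ev])
           (use hom5 xMU cont\<gamma> \<gamma>0 in \<open>auto simp: continuous_on_eq_continuous_within continuous_at\<close>)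
      then have contc: "continuous (at 0) c" unfolding continuous_at c_def using \<gamma>0 by simp
      have fg: "\<phi> (c z) = \<gamma> z" if "z \<in> ball 0 \<delta>" for z
        unfolding c_def using hom3 \<gamma>M \<delta>(2)[of z] that by (simp add: dist_commute)
      have dh: "(\<gamma> has_derivative (\<lambda>t. t *\<^sub>R v)) (at 0)"
        using d\<gamma> unfolding has_vector_derivative_def .
      have dc: "(c has_derivative (\<lambda>z. L (z *\<^sub>R v))) (at 0)"
        by (rule has_derivative_left_inverse_comp[where f=\<phi> and f'="blinfun_apply (D w0)" and h=\<gamma> and T="ball 0 \<delta>"])
           (use derw0 c0 bL Linv contc \<delta> fg dh in auto)
      have "((\<lambda>t. \<phi> (c t)) has_derivative (\<lambda>z. D w0 (L (z *\<^sub>R v)))) (at 0)"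
        using has_derivative_compose[OF dc, of \<phi> "blinfun_apply (D w0)"] derw0 c0 by simp
      then have "(\<gamma> has_derivative (\<lambda>z. D w0 (L (z *\<^sub>R v)))) (at 0)"
        by (rule has_derivative_transform_within_open[where s="ball 0 \<delta>"]) (use \<delta> fg in auto)
      then have "(\<lambda>z. D w0 (L (z *\<^sub>R v))) = (\<lambda>t. t *\<^sub>R v)"
        using dh has_derivative_unique by blast
      then have "D w0 (L v) = v" by (metis scaleR_one)
      then show "v \<in> range (blinfun_apply (D w0))" by (metis rangeI)
    qed
  qed
qed

lemma chart_at:
  fixes M :: "'a::euclidean_space set"
  assumes "C1_submanifold TYPE('m) M" "x \<in> M"
  obtains U W \<phi> \<psi> and D :: "'m::euclidean_space \<Rightarrow> ('m \<Rightarrow>\<^sub>L 'a)" where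
    "open U" "x \<in> U" "open W" "homeomorphism W (M \<inter> U) \<phi> \<psi>"
    "\<And>w. w \<in> W \<Longrightarrow> (\<phi> has_derivative blinfun_apply (D w)) (at w) \<and> inj (blinfun_apply (D w))"
    "continuous_on W D"
  using assms unfolding C1_submanifold_def by metis

lemma tangent_space_range:
  fixes M :: "'a::euclidean_space set" and D :: "'m::euclidean_space \<Rightarrow> ('m \<Rightarrow>\<^sub>L 'a)"
  assumes "open U" "open W" "homeomorphism W (M \<inter> U) \<phi> \<psi>"
    "\<And>w. w \<in> W \<Longrightarrow> (\<phi> has_derivative blinfun_apply (D w)) (at w) \<and> inj (blinfun_apply (D w))"
    "y \<in> M \<inter> U"
  shows "tangent_space M y = range (blinfun_apply (D (\<psi> y)))" "\<psi> y \<in> W"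
proof -
  have "\<psi> y \<in> W" "\<phi> (\<psi> y) = y" using assms(3,5) unfolding homeomorphism_def by auto
  then show "tangent_space M y = range (blinfun_apply (D (\<psi> y)))" "\<psi> y \<in> W"
    using tangent_space_chart[OF assms(1-4), of "\<psi> y"] by auto
qed

lemma dim_range_inj:
  fixes D :: "'m::euclidean_space \<Rightarrow>\<^sub>L 'a::euclidean_space"
  assumes "inj (blinfun_apply D)"
  shows "dim (range (blinfun_apply D)) = DIM('m)"
proof -
  have lin: "linear (blinfun_apply D)" by (simp add: blinfun.bounded_linear_right bounded_linear.linear)
  have "independent (blinfun_apply D ` Basis)"
    by (rule linear_independent_injective_image[OF lin independent_Basis inj_on_subset[OF assms subset_UNIV]])
  moreover have "span (blinfun_apply D ` Basis) = range (blinfun_apply D)"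
    using span_linear_image[OF lin, of Basis] by (simp add: span_Basis)
  moreover have "card (blinfun_apply D ` Basis) = DIM('m)"
    using card_image[OF inj_on_subset[OF assms subset_UNIV]] by simp
  ultimately show ?thesis
    by (metis dim_eq_card_independent dim_span)
qed

lemma tangent_space_subspace_dim:
  fixes M :: "'a::euclidean_space set"
  assumes "C1_submanifold TYPE('m::euclidean_space) M" "x \<in> M"
  shows "subspace (tangent_space M x)" "dim (tangent_space M x) = DIM('m)"
proof -
  obtain U W \<phi> \<psi> and D :: "'m \<Rightarrow> ('m \<Rightarrow>\<^sub>L 'a)" where ch:
    "open U" "x \<in> U" "open W" "homeomorphism W (M \<inter> U) \<phi> \<psi>"
    "\<And>w. w \<in> W \<Longrightarrow> (\<phi> has_derivative blinfun_apply (D w)) (at w) \<and> inj (blinfun_apply (D w))"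
    "continuous_on W D"
    using chart_at[OF assms] by blast
  have xMU: "x \<in> M \<inter> U" using assms ch by auto
  note tr = tangent_space_range[OF ch(1,3,4,5) xMU]
  have lin: "linear (blinfun_apply (D (\<psi> x)))" by (simp add: blinfun.bounded_linear_right bounded_linear.linear)
  show "subspace (tangent_space M x)"
    using tr(1) linear_subspace_image[OF lin subspace_UNIV] by simp
  have "dim (range (blinfun_apply (D (\<psi> x)))) = DIM('m)"
    by (rule dim_range_inj) (use ch(5) tr(2) in blast)
  then show "dim (tangent_space M x) = DIM('m)" using tr(1) by simp
qed

lemma tangent_bundle_closed:
  fixes M :: "'a::euclidean_space set"
  assumes man: "C1_submanifold TYPE('m::euclidean_space) M" and x: "x \<in> M"
    and xs: "\<And>j. xs j \<in> M" "xs \<longlonglongrightarrow> x"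
    and vs: "\<And>j. vs j \<in> tangent_space M (xs j)" "vs \<longlonglongrightarrow> v"
  shows "v \<in> tangent_space M x"
proof -
  obtain U W \<phi> \<psi> and D :: "'m \<Rightarrow> ('m \<Rightarrow>\<^sub>L 'a)" where ch:
    "open U" "x \<in> U" "open W" "homeomorphism W (M \<inter> U) \<phi> \<psi>"
    "\<And>w. w \<in> W \<Longrightarrow> (\<phi> has_derivative blinfun_apply (D w)) (at w) \<and> inj (blinfun_apply (D w))"
    "continuous_on W D"
    using chart_at[OF man x] by blast
  have xMU: "x \<in> M \<inter> U" using x ch by auto
  note trx = tangent_space_range[OF ch(1,3,4,5) xMU]
  define w0 where "w0 = \<psi> x"
  define R where "R = range (blinfun_apply (D w0))"
  have lin: "linear (blinfun_apply (D w0))" by (simp add: blinfun.bounded_linear_right bounded_linear.linear)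
  have injD: "inj (blinfun_apply (D w0))" using ch(5) trx(2) unfolding w0_def by blast
  obtain m where m: "m > 0" "\<And>u. m * norm u \<le> norm (D w0 u)"
    using linear_inj_bounded_below_pos[OF lin injD] by blast
  have Rsub: "subspace R" unfolding R_def using linear_subspace_image[OF lin subspace_UNIV] by simp
  have Rcl: "closed R" by (rule closed_subspace[OF Rsub])
  have Rne: "R \<noteq> {}" unfolding R_def by auto
  have evU: "eventually (\<lambda>j. xs j \<in> M \<inter> U) sequentially"
    using topological_tendstoD[OF xs(2) ch(1,2)] xs(1) by (auto elim: eventually_mono)
  have cont\<psi>: "continuous (at x within M \<inter> U) \<psi>"
    using ch(4) xMU unfolding homeomorphism_def continuous_on_eq_continuous_within by auto
  have ws: "(\<lambda>j. \<psi> (xs j)) \<longlonglongrightarrow> w0"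
    unfolding w0_def by (rule continuous_within_tendsto_compose[OF cont\<psi> evU xs(2)])
  have w0W: "w0 \<in> W" using trx(2) unfolding w0_def .
  have contD: "isCont D w0" using ch(6) ch(3) w0W by (simp add: continuous_on_eq_continuous_at)
  have Ds: "(\<lambda>j. D (\<psi> (xs j))) \<longlonglongrightarrow> D w0" using isCont_tendsto_compose[OF contD ws] .
  then have Dn: "(\<lambda>j. norm (D (\<psi> (xs j)) - D w0)) \<longlonglongrightarrow> 0"
    using tendsto_norm_zero[OF LIM_zero[OF Ds]] by simp
  have evm: "eventually (\<lambda>j. norm (D (\<psi> (xs j)) - D w0) < m / 2) sequentially"
    using order_tendstoD(2)[OF Dn, of "m/2"] m(1) by simp
  have bound: "eventually (\<lambda>j. norm (infdist (vs j) R) \<le> norm (D (\<psi> (xs j)) - D w0) * (2 / m * norm (vs j))) sequentially"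
    using evU evm
  proof eventually_elim
    case (elim j)
    let ?Dj = "D (\<psi> (xs j))"
    have "vs j \<in> range (blinfun_apply ?Dj)"
      using vs(1)[of j] tangent_space_range(1)[OF ch(1,3,4,5) elim(1)] by simp
    then obtain u where u: "vs j = ?Dj u" by auto
    have nd: "norm (?Dj u - D w0 u) \<le> norm (?Dj - D w0) * norm u"
      using norm_blinfun[of "?Dj - D w0" u] by (simp add: blinfun.diff_left)
    have "m * norm u \<le> norm (D w0 u)" by (rule m(2))
    also have "\<dots> \<le> norm (?Dj u) + norm (?Dj u - D w0 u)" by (metis norm_triangle_sub norm_minus_commute add.commute)
    also have "\<dots> \<le> norm (vs j) + m / 2 * norm u"
      using nd elim(2) u by (smt (verit) mult_right_mono norm_ge_zero)
    finally have un: "norm u \<le> 2 / m * norm (vs j)" using m(1) by (simp add: field_simps)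
    have "infdist (vs j) R \<le> dist (vs j) (D w0 u)" by (rule infdist_le) (simp add: R_def)
    also have "\<dots> = norm (?Dj u - D w0 u)" by (simp add: u dist_norm)
    also have "\<dots> \<le> norm (?Dj - D w0) * norm u" by (rule nd)
    also have "\<dots> \<le> norm (?Dj - D w0) * (2 / m * norm (vs j))" by (rule mult_left_mono[OF un norm_ge_zero])
    finally show ?case using infdist_nonneg[of "vs j" R] by (simp only: real_norm_def abs_of_nonneg)
  qed
  have "(\<lambda>j. norm (D (\<psi> (xs j)) - D w0) * (2 / m * norm (vs j))) \<longlonglongrightarrow> 0 * (2 / m * norm v)"
    by (intro tendsto_intros Dn vs(2))
  then have "(\<lambda>j. infdist (vs j) R) \<longlonglongrightarrow> 0"
    using Lim_null_comparison[OF bound] by simp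
  moreover have "(\<lambda>j. infdist (vs j) R) \<longlonglongrightarrow> infdist v R" by (intro tendsto_intros vs(2))
  ultimately have "infdist v R = 0" using LIMSEQ_unique by blast
  then have "v \<in> R" using in_closed_iff_infdist_zero[OF Rcl Rne] by simp
  then show ?thesis using trx(1) unfolding R_def w0_def by simp
qed

primrec fw :: "(nat \<Rightarrow> 'a \<Rightarrow> 'a) \<Rightarrow> nat list \<Rightarrow> 'a \<Rightarrow> 'a" where
  "fw f [] = id"
| "fw f (a # xs) = fw f xs \<circ> f a"

primrec DW :: "(nat \<Rightarrow> 'a \<Rightarrow> 'a) \<Rightarrow> (nat \<Rightarrow> 'a \<Rightarrow> ('a::real_normed_vector \<Rightarrow>\<^sub>L 'a)) \<Rightarrow> nat list \<Rightarrow> 'a \<Rightarrow> ('a \<Rightarrow>\<^sub>L 'a)" where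
  "DW f Df [] x = id_blinfun"
| "DW f Df (a # xs) x = DW f Df xs (f a x) o\<^sub>L Df a x"

primrec IW :: "(nat \<Rightarrow> 'a \<Rightarrow> 'a) \<Rightarrow> (nat \<Rightarrow> 'a \<Rightarrow> ('a::real_normed_vector \<Rightarrow>\<^sub>L 'a)) \<Rightarrow> nat list \<Rightarrow> 'a \<Rightarrow> ('a \<Rightarrow>\<^sub>L 'a)" where
  "IW f Dh [] x = id_blinfun"
| "IW f Dh (a # xs) x = Dh a (f a x) o\<^sub>L IW f Dh xs (f a x)"

lemma fw_append: "fw f (xs @ ys) = fw f ys \<circ> fw f xs"
  by (induction xs) auto

lemma fw_snoc: "fw f (xs @ [a]) = f a \<circ> fw f xs"
  by (simp add: fw_append)

lemma fiter_fw: "fiter f \<omega> n = fw f (pre n \<omega>)"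
  by (induction n) (auto simp: pre_Suc fw_snoc pre_def)

lemma blinfun_compose_assoc': "(a o\<^sub>L b) o\<^sub>L c = a o\<^sub>L (b o\<^sub>L c)"
  by (rule blinfun_eqI) simp

lemma DW_append: "DW f Df (xs @ ys) x = DW f Df ys (fw f xs x) o\<^sub>L DW f Df xs x"
proof (induction xs arbitrary: x)
  case Nil
  show ?case by (auto intro: blinfun_eqI)
qed (auto simp: blinfun_compose_assoc')

lemma vd_chain:
  assumes "(\<gamma> has_vector_derivative v) (at 0)" "(g has_derivative blinfun_apply G) (at (\<gamma> 0))"
  shows "((\<lambda>t. g (\<gamma> t)) has_vector_derivative G v) (at 0)"
proof -
  have "(\<gamma> has_derivative (\<lambda>t. t *\<^sub>R v)) (at 0)" using assms(1) unfolding has_vector_derivative_def .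
  from has_derivative_compose[OF this assms(2)]
  show ?thesis unfolding has_vector_derivative_def by (simp add: blinfun.scaleR_right)
qed

locale dyn =
  fixes M :: "'a::euclidean_space set" and f :: "nat \<Rightarrow> 'a \<Rightarrow> 'a" and k :: nat
    and Df :: "nat \<Rightarrow> 'a \<Rightarrow> ('a \<Rightarrow>\<^sub>L 'a)" and h :: "nat \<Rightarrow> 'a \<Rightarrow> 'a"
    and Dh :: "nat \<Rightarrow> 'a \<Rightarrow> ('a \<Rightarrow>\<^sub>L 'a)" and d :: nat
  assumes compactM: "compact M"
    and fder: "\<And>i y. i \<in> {1..k} \<Longrightarrow> (f i has_derivative blinfun_apply (Df i y)) (at y)"
    and fcont: "\<And>i. i \<in> {1..k} \<Longrightarrow> continuous_on UNIV (Df i)"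
    and fM: "\<And>i x. i \<in> {1..k} \<Longrightarrow> x \<in> M \<Longrightarrow> f i x \<in> M"
    and hder: "\<And>i y. i \<in> {1..k} \<Longrightarrow> (h i has_derivative blinfun_apply (Dh i y)) (at y)"
    and hcont: "\<And>i. i \<in> {1..k} \<Longrightarrow> continuous_on UNIV (Dh i)"
    and hf: "\<And>i x. i \<in> {1..k} \<Longrightarrow> x \<in> M \<Longrightarrow> h i (f i x) = x"
    and Tsub: "\<And>x. x \<in> M \<Longrightarrow> subspace (tangent_space M x)"
    and Tdim: "\<And>x. x \<in> M \<Longrightarrow> dim (tangent_space M x) = d"
    and Tclosed: "\<And>x xs vs v. x \<in> M \<Longrightarrow> (\<And>j. xs j \<in> M) \<Longrightarrow> xs \<longlonglongrightarrow> x \<Longrightarrow>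
        (\<And>j. vs j \<in> tangent_space M (xs j)) \<Longrightarrow> vs \<longlonglongrightarrow> v \<Longrightarrow> v \<in> tangent_space M x"
begin

abbreviation "T \<equiv> tangent_space M"
abbreviation "W \<equiv> fw f"
abbreviation "DWf \<equiv> DW f Df"
abbreviation "IWf \<equiv> IW f Dh"

lemma fcontf: "i \<in> {1..k} \<Longrightarrow> continuous_on UNIV (f i)"
  using fder by (meson continuous_at_imp_continuous_on has_derivative_continuous)

lemma fw_M: "set xs \<subseteq> {1..k} \<Longrightarrow> x \<in> M \<Longrightarrow> W xs x \<in> M"
  by (induction xs arbitrary: x) (auto simp: fM)

lemma fw_der: "set xs \<subseteq> {1..k} \<Longrightarrow> (W xs has_derivative blinfun_apply (DWf xs x)) (at x)"
proof (induction xs arbitrary: x)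
  case Nil
  then show ?case by (simp add: id_def)
next
  case (Cons a xs)
  have "((\<lambda>y. W xs (f a y)) has_derivative (\<lambda>y. DWf xs (f a x) (Df a x y))) (at x)"
    using has_derivative_compose[OF fder[of a x] Cons.IH[of "f a x"]] Cons.prems by auto
  then show ?case by (simp add: o_def)
qed

lemma Dmap_fw: "set xs \<subseteq> {1..k} \<Longrightarrow> Dmap (W xs) x = blinfun_apply (DWf xs x)"
  unfolding Dmap_def using frechet_derivative_at[OF fw_der] by metis

lemma fw_cont: "set xs \<subseteq> {1..k} \<Longrightarrow> continuous_on UNIV (W xs)"
  using fw_der by (meson continuous_at_imp_continuous_on has_derivative_continuous)

lemma DW_cont: "set xs \<subseteq> {1..k} \<Longrightarrow> continuous_on UNIV (DWf xs)"
proof (induction xs)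
  case Nil
  then show ?case by simp
next
  case (Cons a xs)
  have c1: "continuous_on UNIV (\<lambda>x. DWf xs (f a x))"
    by (rule continuous_on_compose2[of UNIV _ UNIV]) (use Cons fcontf in auto)
  have c2: "continuous_on UNIV (Df a)" using fcont Cons.prems by auto
  show ?case using c1 c2 by (simp add: continuous_intros)
qed

lemma Df_T:
  assumes "i \<in> {1..k}" "x \<in> M" "v \<in> T x"
  shows "Df i x v \<in> T (f i x)"
proof -
  obtain \<gamma> where \<gamma>: "\<And>t. \<gamma> t \<in> M" "\<gamma> 0 = x" "(\<gamma> has_vector_derivative v) (at 0)"
    using assms(3) unfolding tangent_space_def by blast
  have "((\<lambda>t. f i (\<gamma> t)) has_vector_derivative Df i x v) (at 0)"
    by (rule vd_chain[OF \<gamma>(3)]) (use fder assms(1) \<gamma>(2) in auto)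
  moreover have "\<And>t. f i (\<gamma> t) \<in> M" using \<gamma>(1) fM assms(1) by auto
  ultimately show ?thesis unfolding tangent_space_def using \<gamma>(2)
    by (intro CollectI exI[of _ "\<lambda>t. f i (\<gamma> t)"]) auto
qed

lemma Dh_Df:
  assumes "i \<in> {1..k}" "x \<in> M" "v \<in> T x"
  shows "Dh i (f i x) (Df i x v) = v"
proof -
  obtain \<gamma> where \<gamma>: "\<And>t. \<gamma> t \<in> M" "\<gamma> 0 = x" "(\<gamma> has_vector_derivative v) (at 0)"
    using assms(3) unfolding tangent_space_def by blast
  have d1: "((\<lambda>t. f i (\<gamma> t)) has_vector_derivative Df i x v) (at 0)"
    by (rule vd_chain[OF \<gamma>(3)]) (use fder assms(1) \<gamma>(2) in auto)
  have "((\<lambda>t. h i (f i (\<gamma> t))) has_vector_derivative Dh i (f i x) (Df i x v)) (at 0)"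
    by (rule vd_chain[OF d1]) (use hder assms(1) \<gamma>(2) in auto)
  moreover have "(\<lambda>t. h i (f i (\<gamma> t))) = \<gamma>" using hf assms(1) \<gamma>(1) by auto
  ultimately show ?thesis using \<gamma>(3) vector_derivative_unique_at by metis
qed

lemma DW_T: "set xs \<subseteq> {1..k} \<Longrightarrow> x \<in> M \<Longrightarrow> v \<in> T x \<Longrightarrow> DWf xs x v \<in> T (W xs x)"
  by (induction xs arbitrary: x v) (auto simp: Df_T fM)

lemma IW_DW: "set xs \<subseteq> {1..k} \<Longrightarrow> x \<in> M \<Longrightarrow> v \<in> T x \<Longrightarrow> IWf xs x (DWf xs x v) = v"
  by (induction xs arbitrary: x v) (auto simp: Df_T fM Dh_Df)

lemma bounds_exist: "\<exists>L\<ge>1. \<forall>i\<in>{1..k}. \<forall>x\<in>M. norm (Df i x) \<le> L \<and> norm (Dh i (f i x)) \<le> L"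
proof -
  define K where "K = (\<Union>i\<in>{1..k}. (\<lambda>x. norm (Df i x)) ` M \<union> (\<lambda>x. norm (Dh i (f i x))) ` M)"
  have "compact K" unfolding K_def
  proof (intro compact_UN compact_Un)
    fix i assume i: "i \<in> {1..k}"
    show "compact ((\<lambda>x. norm (Df i x)) ` M)"
      by (rule compact_continuous_image[OF _ compactM]) (use fcont[OF i] in \<open>auto intro: continuous_on_subset continuous_intros\<close>)
    have "continuous_on UNIV (\<lambda>x. Dh i (f i x))"
      by (rule continuous_on_compose2[of UNIV _ UNIV]) (use hcont[OF i] fcontf[OF i] in auto)
    then show "compact ((\<lambda>x. norm (Dh i (f i x))) ` M)"
      by (intro compact_continuous_image[OF _ compactM]) (auto intro: continuous_on_subset continuous_intros)
  qed simp
  then obtain B where B: "\<And>y. y \<in> K \<Longrightarrow> norm y \<le> B" using compact_imp_bounded bounded_iff by metis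
  show ?thesis
    by (rule exI[of _ "max 1 B"]) (use B in \<open>force simp: K_def\<close>)
qed

end

locale dyn2 = dyn +
  fixes r :: nat
  assumes r1: "1 \<le> r" and rd: "r < d"
begin

definition good :: "'a \<Rightarrow> 'a set \<Rightarrow> bool" where
  "good x E \<longleftrightarrow> x \<in> M \<and> subspace E \<and> E \<subseteq> T x \<and> dim E = r"

definition STw :: "'a \<Rightarrow> 'a set \<Rightarrow> nat list \<Rightarrow> real" where
  "STw x E xs = ST (T x) (T (W xs x)) E (blinfun_apply (DWf xs x))"

definition IAw :: "'a \<Rightarrow> 'a set \<Rightarrow> nat list \<Rightarrow> real" where
  "IAw x E xs = IA E (blinfun_apply (DWf xs x))"

definition Lb :: real where
  "Lb = (SOME L. L \<ge> 1 \<and> (\<forall>i\<in>{1..k}. \<forall>x\<in>M. norm (Df i x) \<le> L \<and> norm (Dh i (f i x)) \<le> L))"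

lemma Lb: "Lb \<ge> 1" "\<And>i x. i \<in> {1..k} \<Longrightarrow> x \<in> M \<Longrightarrow> norm (Df i x) \<le> Lb"
  "\<And>i x. i \<in> {1..k} \<Longrightarrow> x \<in> M \<Longrightarrow> norm (Dh i (f i x)) \<le> Lb"
  using someI_ex[OF bounds_exist] unfolding Lb_def by auto

lemma norm_DW: "set xs \<subseteq> {1..k} \<Longrightarrow> x \<in> M \<Longrightarrow> norm (DWf xs x) \<le> Lb ^ length xs"
proof (induction xs arbitrary: x)
  case Nil
  then show ?case by simp
next
  case (Cons a xs)
  have "norm (DWf (a # xs) x) \<le> norm (DWf xs (f a x)) * norm (Df a x)"
    by (simp add: norm_blinfun_compose)
  also have "\<dots> \<le> Lb ^ length xs * Lb"
    using Cons fM Lb by (intro mult_mono) auto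
  finally show ?case by (simp add: mult.commute)
qed

lemma norm_IW: "set xs \<subseteq> {1..k} \<Longrightarrow> x \<in> M \<Longrightarrow> norm (IWf xs x) \<le> Lb ^ length xs"
proof (induction xs arbitrary: x)
  case Nil
  then show ?case by simp
next
  case (Cons a xs)
  have "norm (IWf (a # xs) x) \<le> norm (Dh a (f a x)) * norm (IWf xs (f a x))"
    by (simp add: norm_blinfun_compose)
  also have "\<dots> \<le> Lb * Lb ^ length xs"
    using Cons fM Lb by (intro mult_mono) auto
  finally show ?case by simp
qed

lemma lin_bl: "linear (blinfun_apply A)"
  by (simp add: blinfun.bounded_linear_right bounded_linear.linear)

lemma DW_inj:
  assumes "set xs \<subseteq> {1..k}" "x \<in> M" "u \<in> T x" "u \<noteq> 0"
  shows "DWf xs x u \<noteq> 0"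
  using IW_DW[OF assms(1-3)] assms(4) by (metis blinfun.zero_right)

lemma good_step:
  assumes "good x E" "set xs \<subseteq> {1..k}"
  shows "good (W xs x) (blinfun_apply (DWf xs x) ` E)"
proof -
  have x: "x \<in> M" and E: "subspace E" "E \<subseteq> T x" "dim E = r" using assms(1) unfolding good_def by auto
  have "W xs x \<in> M" using fw_M assms(2) x by blast
  moreover have "subspace (blinfun_apply (DWf xs x) ` E)" by (rule linear_subspace_image[OF lin_bl E(1)])
  moreover have "blinfun_apply (DWf xs x) ` E \<subseteq> T (W xs x)" using DW_T assms(2) x E(2) by blast
  moreover have "dim (blinfun_apply (DWf xs x) ` E) = dim E"
  proof (rule dim_image_eq[OF lin_bl])
    have "span E = E" using E(1) by (simp add: span_eq_iff)
    then show "inj_on (blinfun_apply (DWf xs x)) (span E)"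
      using IW_DW[OF assms(2) x] E(2) unfolding inj_on_def by (metis subsetD)
  qed
  ultimately show ?thesis unfolding good_def using E by simp
qed

lemma good_ne_orth: "good x E \<Longrightarrow> unit_vecs (orth_compl_in (T x) E) \<noteq> {}"
proof -
  assume g: "good x E"
  then have x: "x \<in> M" and E: "subspace E" "E \<subseteq> T x" "dim E = r" unfolding good_def by auto
  obtain v where "v \<in> orth_compl_in (T x) E" "v \<noteq> 0"
    using exists_orth_nonzero[OF Tsub[OF x] E(1,2)] E(3) Tdim[OF x] rd by auto
  then show ?thesis using unit_vecs_ne[OF subspace_orth_compl_in[OF Tsub[OF x]]] by blast
qed

lemma good_ne_E: "good x E \<Longrightarrow> unit_vecs E \<noteq> {}"
  using unit_vecs_ne_dim r1 unfolding good_def by auto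

lemma good_TW: "good x E \<Longrightarrow> set xs \<subseteq> {1..k} \<Longrightarrow> blinfun_apply (DWf xs x) ` T x \<subseteq> T (W xs x)"
  using DW_T unfolding good_def by blast

lemma STw_upper: "good x E \<Longrightarrow> set xs \<subseteq> {1..k} \<Longrightarrow> STw x E xs \<le> Lb ^ length xs"
  unfolding STw_def
proof (rule ST_upper_bound[OF Tsub lin_bl])
  assume g: "good x E" and xs: "set xs \<subseteq> {1..k}"
  show "W xs x \<in> M" using g xs fw_M unfolding good_def by blast
  show "norm (DWf xs x y) \<le> Lb ^ length xs * norm y" for y
    using norm_blinfun[of "DWf xs x" y] norm_DW[OF xs] g unfolding good_def
    by (meson mult_right_mono norm_ge_zero order_trans)
  show "unit_vecs (orth_compl_in (T x) E) \<noteq> {}" by (rule good_ne_orth[OF g])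
qed

lemma STw_lower: "good x E \<Longrightarrow> set xs \<subseteq> {1..k} \<Longrightarrow> 1 / Lb ^ length xs \<le> STw x E xs"
  unfolding STw_def
proof (rule ST_lower[OF _ _ _ _ lin_bl lin_bl])
  assume g: "good x E" and xs: "set xs \<subseteq> {1..k}"
  have x: "x \<in> M" using g unfolding good_def by auto
  show "subspace (T x)" using Tsub x by blast
  show "subspace (T (W xs x))" using Tsub fw_M xs x by blast
  show "subspace E" "E \<subseteq> T x" using g unfolding good_def by auto
  show "blinfun_apply (DWf xs x) ` T x \<subseteq> T (W xs x)" using good_TW[OF g xs] .
  show "IWf xs x (DWf xs x u) = u" if "u \<in> T x" for u using IW_DW[OF xs x that] .
  show "0 < Lb ^ length xs" using Lb(1) by simp
  show "norm (IWf xs x y) \<le> Lb ^ length xs * norm y" for y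
    using norm_blinfun[of "IWf xs x" y] norm_IW[OF xs x]
    by (meson mult_right_mono norm_ge_zero order_trans)
  show "unit_vecs (orth_compl_in (T x) E) \<noteq> {}" by (rule good_ne_orth[OF g])
qed

lemma STw_pos: "good x E \<Longrightarrow> set xs \<subseteq> {1..k} \<Longrightarrow> 0 < STw x E xs"
  using STw_lower[of x E xs] Lb(1) by (smt (verit) divide_pos_pos zero_less_power)

lemma IAw_upper: "good x E \<Longrightarrow> set xs \<subseteq> {1..k} \<Longrightarrow> IAw x E xs \<le> Lb ^ length xs"
  unfolding IAw_def
proof (rule IA_upper)
  assume g: "good x E" and xs: "set xs \<subseteq> {1..k}"
  show "unit_vecs E \<noteq> {}" by (rule good_ne_E[OF g])
  show "norm (DWf xs x y) \<le> Lb ^ length xs * norm y" for y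
    using norm_blinfun[of "DWf xs x" y] norm_DW[OF xs] g unfolding good_def
    by (meson mult_right_mono norm_ge_zero order_trans)
qed

lemma IAw_lower: "good x E \<Longrightarrow> set xs \<subseteq> {1..k} \<Longrightarrow> 1 / Lb ^ length xs \<le> IAw x E xs"
  unfolding IAw_def
proof (rule IA_lower)
  assume g: "good x E" and xs: "set xs \<subseteq> {1..k}"
  have x: "x \<in> M" using g unfolding good_def by auto
  show "unit_vecs E \<noteq> {}" by (rule good_ne_E[OF g])
  show "IWf xs x (DWf xs x u) = u" if "u \<in> E" for u
    using IW_DW[OF xs x] that g unfolding good_def by blast
  show "0 < Lb ^ length xs" using Lb(1) by simp
  show "norm (IWf xs x y) \<le> Lb ^ length xs * norm y" for y
    using norm_blinfun[of "IWf xs x" y] norm_IW[OF xs x]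
    by (meson mult_right_mono norm_ge_zero order_trans)
qed

lemma IAw_pos: "good x E \<Longrightarrow> set xs \<subseteq> {1..k} \<Longrightarrow> 0 < IAw x E xs"
  using IAw_lower[of x E xs] Lb(1) by (smt (verit) divide_pos_pos zero_less_power)

lemma STw_cocycle:
  assumes g: "good x E" and xs: "set xs \<subseteq> {1..k}" and ys: "set ys \<subseteq> {1..k}"
  shows "STw x E (xs @ ys) \<le> STw x E xs * STw (W xs x) (blinfun_apply (DWf xs x) ` E) ys"
proof -
  have x: "x \<in> M" using g unfolding good_def by auto
  have g2: "good (W xs x) (blinfun_apply (DWf xs x) ` E)" by (rule good_step[OF g xs])
  have x2: "W xs x \<in> M" using g2 unfolding good_def by auto
  have comp: "blinfun_apply (DWf (xs @ ys) x) = blinfun_apply (DWf ys (W xs x)) \<circ> blinfun_apply (DWf xs x)"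
    by (simp add: DW_append fun_eq_iff)
  have Wapp: "W (xs @ ys) x = W ys (W xs x)" by (simp add: fw_append)
  show ?thesis
    unfolding STw_def comp Wapp
  proof (rule ST_cocycle[OF _ _ _ _ _ lin_bl lin_bl])
    show "subspace (T x)" "subspace (T (W xs x))" "subspace (T (W ys (W xs x)))"
      using Tsub x x2 fw_M[OF ys x2] by auto
    show "subspace E" "E \<subseteq> T x" using g unfolding good_def by auto
    show "blinfun_apply (DWf xs x) ` T x \<subseteq> T (W xs x)" by (rule good_TW[OF g xs])
    show "blinfun_apply (DWf ys (W xs x)) ` T (W xs x) \<subseteq> T (W ys (W xs x))" by (rule good_TW[OF g2 ys])
    show "unit_vecs (orth_compl_in (T x) E) \<noteq> {}" by (rule good_ne_orth[OF g])
    show "unit_vecs (orth_compl_in (T (W xs x)) (blinfun_apply (DWf xs x) ` E)) \<noteq> {}" by (rule good_ne_orth[OF g2])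
  qed
qed

lemma IAw_cocycle:
  assumes g: "good x E" and xs: "set xs \<subseteq> {1..k}" and ys: "set ys \<subseteq> {1..k}"
  shows "IAw x E xs * IAw (W xs x) (blinfun_apply (DWf xs x) ` E) ys \<le> IAw x E (xs @ ys)"
proof -
  have x: "x \<in> M" using g unfolding good_def by auto
  have comp: "blinfun_apply (DWf (xs @ ys) x) = blinfun_apply (DWf ys (W xs x)) \<circ> blinfun_apply (DWf xs x)"
    by (simp add: DW_append fun_eq_iff)
  show ?thesis
    unfolding IAw_def comp
  proof (rule IA_cocycle[OF _ lin_bl lin_bl])
    show "subspace E" using g unfolding good_def by auto
    show "unit_vecs E \<noteq> {}" by (rule good_ne_E[OF g])
    show "DWf xs x u \<noteq> 0" if "u \<in> E" "u \<noteq> 0" for u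
      using DW_inj[OF xs x _ that(2)] that(1) g unfolding good_def by blast
  qed
qed

end

lemma exp_quad:
  fixes z :: real
  assumes "\<bar>z\<bar> \<le> 1"
  shows "exp z \<le> 1 + z + z\<^sup>2"
proof (cases "z \<ge> 0")
  case True
  then show ?thesis using exp_bound[of z] assms by simp
next
  case False
  define t where "t = - z"
  have t: "0 \<le> t" "t \<le> 1" using False assms by (auto simp: t_def)
  have "1 \<le> (1 + t + t\<^sup>2 / 2) * (1 - t + t\<^sup>2)"
  proof -
    have "(1 + t + t\<^sup>2 / 2) * (1 - t + t\<^sup>2) = 1 + t\<^sup>2 / 2 + t ^ 3 / 2 + t ^ 4 / 2"
      by (simp add: field_simps power2_eq_square power3_eq_cube power4_eq_xxxx)
    also have "\<dots> \<ge> 1" using t by simp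
    finally show ?thesis .
  qed
  also have "\<dots> \<le> exp t * (1 - t + t\<^sup>2)"
    by (rule mult_right_mono[OF exp_lower_Taylor_quadratic[OF t(1)]]) (use t in \<open>smt (verit) zero_le_power2\<close>)
  finally have "1 \<le> exp t * (1 - t + t\<^sup>2)" .
  then have "exp (- t) \<le> 1 - t + t\<^sup>2"
    by (simp add: exp_minus field_simps)
  then show ?thesis by (simp add: t_def)
qed

lemma avg_exp_bound:
  fixes Y :: "nat list \<Rightarrow> real"
  assumes k: "k \<ge> 1" and K: "K \<ge> 1" and Yb: "\<And>xs. xs \<in> words k n \<Longrightarrow> \<bar>Y xs\<bar> \<le> K"
    and avgY: "avg k n Y \<le> \<mu> - \<delta>" and \<delta>: "\<delta> > 0"
    and \<sigma>: "0 < \<sigma>" "\<sigma> \<le> 1 / K" "\<sigma> \<le> \<delta> / K\<^sup>2"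
  shows "avg k n (\<lambda>xs. exp (\<sigma> * Y xs)) \<le> exp (\<sigma> * \<mu>)"
proof -
  have pt: "exp (\<sigma> * Y xs) \<le> 1 + \<sigma> * Y xs + \<sigma>\<^sup>2 * K\<^sup>2" if xs: "xs \<in> words k n" for xs
  proof -
    have "\<bar>\<sigma> * Y xs\<bar> \<le> \<sigma> * K" using Yb[OF xs] \<sigma>(1) by (simp add: abs_mult mult_left_mono)
    also have "\<dots> \<le> 1" using \<sigma> K by (simp add: field_simps)
    finally have "exp (\<sigma> * Y xs) \<le> 1 + \<sigma> * Y xs + (\<sigma> * Y xs)\<^sup>2" by (rule exp_quad)
    also have "(\<sigma> * Y xs)\<^sup>2 \<le> \<sigma>\<^sup>2 * K\<^sup>2"
    proof -
      have "\<bar>Y xs\<bar>\<^sup>2 \<le> K\<^sup>2" by (rule power_mono[OF Yb[OF xs] abs_ge_zero])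
      then have "(Y xs)\<^sup>2 \<le> K\<^sup>2" by simp
      then show ?thesis by (simp add: power_mult_distrib mult_left_mono)
    qed
    finally show ?thesis by simp
  qed
  have "avg k n (\<lambda>xs. exp (\<sigma> * Y xs)) \<le> avg k n (\<lambda>xs. (1 + \<sigma>\<^sup>2 * K\<^sup>2) + \<sigma> * Y xs)"
  proof (rule avg_mono)
    fix xs assume "xs \<in> words k n"
    from pt[OF this] show "exp (\<sigma> * Y xs) \<le> (1 + \<sigma>\<^sup>2 * K\<^sup>2) + \<sigma> * Y xs" by linarith
  qed
  also have "\<dots> = (1 + \<sigma>\<^sup>2 * K\<^sup>2) + \<sigma> * avg k n Y"
    unfolding avg_def using k by (simp add: sum.distrib sum_distrib_left card_words add_divide_distrib)
  also have "\<dots> \<le> 1 + \<sigma>\<^sup>2 * K\<^sup>2 + \<sigma> * (\<mu> - \<delta>)"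
    using avgY \<sigma>(1) by (simp add: mult_left_mono)
  also have "\<dots> \<le> 1 + \<sigma> * \<mu>"
  proof -
    have "\<sigma> * K\<^sup>2 \<le> \<delta>" using \<sigma>(3) K by (simp add: field_simps)
    then have "\<sigma>\<^sup>2 * K\<^sup>2 \<le> \<sigma> * \<delta>" using \<sigma>(1)
      by (metis mult.assoc mult_left_mono less_eq_real_def power2_eq_square)
    then show ?thesis by (simp add: algebra_simps)
  qed
  also have "\<dots> \<le> exp (\<sigma> * \<mu>)" by (rule exp_ge_add_one_self)
  finally show ?thesis .
qed

context dyn2
begin

lemma words_set: "xs \<in> words k n \<Longrightarrow> set xs \<subseteq> {1..k}" "xs \<in> words k n \<Longrightarrow> length xs = n"
  unfolding words_def by auto

lemma ST_decay:
  assumes k: "k \<ge> 1" and n0: "n0 \<ge> 1" and \<kappa>1: "\<kappa>1 > 0" and \<sigma>: "\<sigma> > 0"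
    and step: "\<And>x E. good x E \<Longrightarrow> avg k n0 (\<lambda>xs. STw x E xs powr \<sigma>) \<le> exp (- real n0 * \<sigma> * \<kappa>1)"
  shows "good x E \<Longrightarrow> avg k N (\<lambda>xs. STw x E xs powr \<sigma>) \<le> (Lb powr (\<sigma> * n0) * exp (\<sigma> * n0 * \<kappa>1)) * exp (- real N * \<sigma> * \<kappa>1)"
proof (induction N arbitrary: x E rule: less_induct)
  case (less N)
  define C where "C = Lb powr (\<sigma> * n0) * exp (\<sigma> * n0 * \<kappa>1)"
  have Lb1: "Lb \<ge> 1" using Lb(1) .
  show ?case
  proof (cases "N < n0")
    case True
    have "avg k N (\<lambda>xs. STw x E xs powr \<sigma>) \<le> avg k N (\<lambda>_. Lb powr (\<sigma> * n0))"
    proof (rule avg_mono)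
      fix xs assume xs: "xs \<in> words k N"
      have "STw x E xs powr \<sigma> \<le> (Lb ^ N) powr \<sigma>"
        using STw_upper[OF less.prems words_set(1)[OF xs]] STw_pos[OF less.prems words_set(1)[OF xs]] \<sigma>
        by (simp add: words_set(2)[OF xs] powr_mono2)
      also have "\<dots> = Lb powr (\<sigma> * N)" using Lb1 by (simp add: powr_realpow[symmetric] powr_powr mult.commute)
      also have "\<dots> \<le> Lb powr (\<sigma> * n0)" using Lb1 True \<sigma> by (intro powr_mono) auto
      finally show "STw x E xs powr \<sigma> \<le> Lb powr (\<sigma> * n0)" .
    qed
    also have "\<dots> = Lb powr (\<sigma> * n0)" by (rule avg_const[OF k])
    also have "\<dots> \<le> C * exp (- real N * \<sigma> * \<kappa>1)"
    proof -
      have "exp (\<sigma> * n0 * \<kappa>1) * exp (- real N * \<sigma> * \<kappa>1) = exp (\<sigma> * \<kappa>1 * (real n0 - real N))"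
        by (simp add: exp_add[symmetric] algebra_simps)
      also have "\<dots> \<ge> 1" using True \<sigma> \<kappa>1 by simp
      finally have "1 \<le> exp (\<sigma> * n0 * \<kappa>1) * exp (- real N * \<sigma> * \<kappa>1)" .
      then have "Lb powr (\<sigma> * n0) * 1 \<le> Lb powr (\<sigma> * n0) * (exp (\<sigma> * n0 * \<kappa>1) * exp (- real N * \<sigma> * \<kappa>1))"
        by (intro mult_left_mono) auto
      then show ?thesis unfolding C_def by (simp add: mult.assoc)
    qed
    finally show ?thesis unfolding C_def .
  next
    case False
    define N' where "N' = N - n0"
    have N: "N = n0 + N'" using False by (simp add: N'_def)
    have IH: "\<And>x E. good x E \<Longrightarrow> avg k N' (\<lambda>xs. STw x E xs powr \<sigma>) \<le> C * exp (- real N' * \<sigma> * \<kappa>1)"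
      using less.IH[of N'] n0 False unfolding C_def N'_def by auto
    have "avg k N (\<lambda>xs. STw x E xs powr \<sigma>) = avg k n0 (\<lambda>xs. avg k N' (\<lambda>ys. STw x E (xs @ ys) powr \<sigma>))"
      unfolding N by (rule avg_append)
    also have "\<dots> \<le> avg k n0 (\<lambda>xs. STw x E xs powr \<sigma> * (C * exp (- real N' * \<sigma> * \<kappa>1)))"
    proof (rule avg_mono)
      fix xs assume xs: "xs \<in> words k n0"
      let ?x' = "W xs x" and ?E' = "blinfun_apply (DWf xs x) ` E"
      have g2: "good ?x' ?E'" by (rule good_step[OF less.prems words_set(1)[OF xs]])
      have "avg k N' (\<lambda>ys. STw x E (xs @ ys) powr \<sigma>) \<le> avg k N' (\<lambda>ys. STw x E xs powr \<sigma> * STw ?x' ?E' ys powr \<sigma>)"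
      proof (rule avg_mono)
        fix ys assume ys: "ys \<in> words k N'"
        have p3: "0 < STw x E (xs @ ys)" using STw_pos[OF less.prems, of "xs @ ys"] words_set(1)[OF xs] words_set(1)[OF ys] by auto
        have "STw x E (xs @ ys) powr \<sigma> \<le> (STw x E xs * STw ?x' ?E' ys) powr \<sigma>"
          using STw_cocycle[OF less.prems words_set(1)[OF xs] words_set(1)[OF ys]] p3 \<sigma>
          by (intro powr_mono2) auto
        also have "\<dots> = STw x E xs powr \<sigma> * STw ?x' ?E' ys powr \<sigma>"
          using STw_pos[OF less.prems words_set(1)[OF xs]] STw_pos[OF g2 words_set(1)[OF ys]]
          by (simp add: powr_mult)
        finally show "STw x E (xs @ ys) powr \<sigma> \<le> STw x E xs powr \<sigma> * STw ?x' ?E' ys powr \<sigma>" .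
      qed
      also have "\<dots> = STw x E xs powr \<sigma> * avg k N' (\<lambda>ys. STw ?x' ?E' ys powr \<sigma>)"
        by (rule avg_mult_const)
      also have "\<dots> \<le> STw x E xs powr \<sigma> * (C * exp (- real N' * \<sigma> * \<kappa>1))"
        by (rule mult_left_mono[OF IH[OF g2]]) simp
      finally show "avg k N' (\<lambda>ys. STw x E (xs @ ys) powr \<sigma>) \<le> STw x E xs powr \<sigma> * (C * exp (- real N' * \<sigma> * \<kappa>1))" .
    qed
    also have "\<dots> = avg k n0 (\<lambda>xs. STw x E xs powr \<sigma>) * (C * exp (- real N' * \<sigma> * \<kappa>1))"
      using avg_mult_const[of k n0 "C * exp (- real N' * \<sigma> * \<kappa>1)" "\<lambda>xs. STw x E xs powr \<sigma>"]
      by (simp add: mult.commute)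
    also have "\<dots> \<le> exp (- real n0 * \<sigma> * \<kappa>1) * (C * exp (- real N' * \<sigma> * \<kappa>1))"
      by (rule mult_right_mono[OF step[OF less.prems]]) (simp add: C_def)
    also have "\<dots> = C * exp (- real N * \<sigma> * \<kappa>1)"
      unfolding N by (simp add: exp_add[symmetric] algebra_simps)
    finally show ?thesis unfolding C_def .
  qed
qed

lemma IA_decay:
  assumes k: "k \<ge> 1" and n0: "n0 \<ge> 1" and \<sigma>: "\<sigma> > 0"
    and step: "\<And>x E. good x E \<Longrightarrow> avg k n0 (\<lambda>xs. IAw x E xs powr (- \<sigma>)) \<le> exp (real n0 * \<sigma> * \<kappa>2)"
  shows "good x E \<Longrightarrow> avg k N (\<lambda>xs. IAw x E xs powr (- \<sigma>)) \<le> (Lb powr (\<sigma> * n0) * exp (\<sigma> * n0 * \<bar>\<kappa>2\<bar>)) * exp (real N * \<sigma> * \<kappa>2)"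
proof (induction N arbitrary: x E rule: less_induct)
  case (less N)
  define C where "C = Lb powr (\<sigma> * n0) * exp (\<sigma> * n0 * \<bar>\<kappa>2\<bar>)"
  have Lb1: "Lb \<ge> 1" using Lb(1) .
  show ?case
  proof (cases "N < n0")
    case True
    have "avg k N (\<lambda>xs. IAw x E xs powr (- \<sigma>)) \<le> avg k N (\<lambda>_. Lb powr (\<sigma> * n0))"
    proof (rule avg_mono)
      fix xs assume xs: "xs \<in> words k N"
      have pos: "0 < IAw x E xs" by (rule IAw_pos[OF less.prems words_set(1)[OF xs]])
      have "IAw x E xs powr (- \<sigma>) = inverse (IAw x E xs powr \<sigma>)" using pos by (simp add: powr_minus)
      also have "\<dots> \<le> inverse ((1 / Lb ^ N) powr \<sigma>)"
        using IAw_lower[OF less.prems words_set(1)[OF xs]] \<sigma> Lb1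
        by (intro le_imp_inverse_le powr_mono2) (auto simp: words_set(2)[OF xs])
      also have "\<dots> = Lb powr (\<sigma> * N)" using Lb1
        by (simp add: powr_divide powr_realpow[symmetric] powr_powr mult.commute powr_minus[symmetric] inverse_eq_divide)
      also have "\<dots> \<le> Lb powr (\<sigma> * n0)" using Lb1 True \<sigma> by (intro powr_mono) auto
      finally show "IAw x E xs powr (- \<sigma>) \<le> Lb powr (\<sigma> * n0)" .
    qed
    also have "\<dots> = Lb powr (\<sigma> * n0)" by (rule avg_const[OF k])
    also have "\<dots> \<le> C * exp (real N * \<sigma> * \<kappa>2)"
    proof -
      have "exp (\<sigma> * n0 * \<bar>\<kappa>2\<bar>) * exp (real N * \<sigma> * \<kappa>2) = exp (\<sigma> * (n0 * \<bar>\<kappa>2\<bar> + N * \<kappa>2))"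
        by (simp add: exp_add[symmetric] algebra_simps)
      also have "\<dots> \<ge> 1"
      proof -
        have "N * \<kappa>2 \<ge> - (N * \<bar>\<kappa>2\<bar>)" using mult_left_mono[of "-\<bar>\<kappa>2\<bar>" \<kappa>2 "real N"] by simp
        moreover have "N * \<bar>\<kappa>2\<bar> \<le> n0 * \<bar>\<kappa>2\<bar>" using True by (simp add: mult_right_mono)
        ultimately have "0 \<le> n0 * \<bar>\<kappa>2\<bar> + N * \<kappa>2" by linarith
        then show ?thesis using \<sigma> by simp
      qed
      finally have "1 \<le> exp (\<sigma> * n0 * \<bar>\<kappa>2\<bar>) * exp (real N * \<sigma> * \<kappa>2)" .
      then have "Lb powr (\<sigma> * n0) * 1 \<le> Lb powr (\<sigma> * n0) * (exp (\<sigma> * n0 * \<bar>\<kappa>2\<bar>) * exp (real N * \<sigma> * \<kappa>2))"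
        by (intro mult_left_mono) auto
      then show ?thesis unfolding C_def by (simp add: mult.assoc)
    qed
    finally show ?thesis unfolding C_def .
  next
    case False
    define N' where "N' = N - n0"
    have N: "N = n0 + N'" using False by (simp add: N'_def)
    have IH: "\<And>x E. good x E \<Longrightarrow> avg k N' (\<lambda>xs. IAw x E xs powr (- \<sigma>)) \<le> C * exp (real N' * \<sigma> * \<kappa>2)"
      using less.IH[of N'] n0 False unfolding C_def N'_def by auto
    have "avg k N (\<lambda>xs. IAw x E xs powr (- \<sigma>)) = avg k n0 (\<lambda>xs. avg k N' (\<lambda>ys. IAw x E (xs @ ys) powr (- \<sigma>)))"
      unfolding N by (rule avg_append)
    also have "\<dots> \<le> avg k n0 (\<lambda>xs. IAw x E xs powr (- \<sigma>) * (C * exp (real N' * \<sigma> * \<kappa>2)))"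
    proof (rule avg_mono)
      fix xs assume xs: "xs \<in> words k n0"
      let ?x' = "W xs x" and ?E' = "blinfun_apply (DWf xs x) ` E"
      have g2: "good ?x' ?E'" by (rule good_step[OF less.prems words_set(1)[OF xs]])
      have "avg k N' (\<lambda>ys. IAw x E (xs @ ys) powr (- \<sigma>)) \<le> avg k N' (\<lambda>ys. IAw x E xs powr (- \<sigma>) * IAw ?x' ?E' ys powr (- \<sigma>))"
      proof (rule avg_mono)
        fix ys assume ys: "ys \<in> words k N'"
        have p1: "0 < IAw x E xs" by (rule IAw_pos[OF less.prems words_set(1)[OF xs]])
        have p2: "0 < IAw ?x' ?E' ys" by (rule IAw_pos[OF g2 words_set(1)[OF ys]])
        have p3: "0 < IAw x E (xs @ ys)" using IAw_pos[OF less.prems] words_set(1)[OF xs] words_set(1)[OF ys] by auto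
        have co: "IAw x E xs * IAw ?x' ?E' ys \<le> IAw x E (xs @ ys)"
          by (rule IAw_cocycle[OF less.prems words_set(1)[OF xs] words_set(1)[OF ys]])
        have "IAw x E (xs @ ys) powr (- \<sigma>) = inverse (IAw x E (xs @ ys) powr \<sigma>)" using p3 by (simp add: powr_minus)
        also have "\<dots> \<le> inverse ((IAw x E xs * IAw ?x' ?E' ys) powr \<sigma>)"
          using p1 p2 co \<sigma> by (intro le_imp_inverse_le powr_mono2) auto
        also have "\<dots> = IAw x E xs powr (- \<sigma>) * IAw ?x' ?E' ys powr (- \<sigma>)"
          using p1 p2 by (simp add: powr_mult powr_minus)
        finally show "IAw x E (xs @ ys) powr (- \<sigma>) \<le> IAw x E xs powr (- \<sigma>) * IAw ?x' ?E' ys powr (- \<sigma>)" .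
      qed
      also have "\<dots> = IAw x E xs powr (- \<sigma>) * avg k N' (\<lambda>ys. IAw ?x' ?E' ys powr (- \<sigma>))"
        by (rule avg_mult_const)
      also have "\<dots> \<le> IAw x E xs powr (- \<sigma>) * (C * exp (real N' * \<sigma> * \<kappa>2))"
        by (rule mult_left_mono[OF IH[OF g2]]) simp
      finally show "avg k N' (\<lambda>ys. IAw x E (xs @ ys) powr (- \<sigma>)) \<le> IAw x E xs powr (- \<sigma>) * (C * exp (real N' * \<sigma> * \<kappa>2))" .
    qed
    also have "\<dots> = avg k n0 (\<lambda>xs. IAw x E xs powr (- \<sigma>)) * (C * exp (real N' * \<sigma> * \<kappa>2))"
      using avg_mult_const[of k n0 "C * exp (real N' * \<sigma> * \<kappa>2)" "\<lambda>xs. IAw x E xs powr (- \<sigma>)"]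
      by (simp add: mult.commute)
    also have "\<dots> \<le> exp (real n0 * \<sigma> * \<kappa>2) * (C * exp (real N' * \<sigma> * \<kappa>2))"
      by (rule mult_right_mono[OF step[OF less.prems]]) (simp add: C_def)
    also have "\<dots> = C * exp (real N * \<sigma> * \<kappa>2)"
      unfolding N by (simp add: exp_add[symmetric] algebra_simps)
    finally show ?thesis unfolding C_def .
  qed
qed

end

lemma subseq_frequently:
  assumes "frequently P sequentially"
  shows "\<exists>\<tau>::nat\<Rightarrow>nat. strict_mono \<tau> \<and> (\<forall>j. P (\<tau> j))"
proof -
  have "infinite {j. P j}" using assms by (simp add: frequently_cofinite[symmetric] cofinite_eq_sequentially)
  from infinite_enumerate[OF this] show ?thesis by auto
qed

lemma multi_subseq:
  fixes F :: "nat \<Rightarrow> nat \<Rightarrow> 'a::heine_borel"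
  assumes "\<And>i. i < n \<Longrightarrow> bounded (range (\<lambda>j. F j i))"
  shows "\<exists>\<sigma> l. strict_mono (\<sigma>::nat\<Rightarrow>nat) \<and> (\<forall>i<n. (\<lambda>j. F (\<sigma> j) i) \<longlonglongrightarrow> l i)"
  using assms
proof (induction n)
  case 0
  then show ?case by (auto intro!: exI[of _ id] simp: strict_mono_def)
next
  case (Suc n)
  then obtain \<sigma> l where \<sigma>: "strict_mono \<sigma>" "\<And>i. i < n \<Longrightarrow> (\<lambda>j. F (\<sigma> j) i) \<longlonglongrightarrow> l i" by auto
  have "bounded (range (\<lambda>j. F (\<sigma> j) n))"
    using Suc.prems[of n] by (rule bounded_subset) auto
  then obtain l' \<rho> where \<rho>: "strict_mono \<rho>" "((\<lambda>j. F (\<sigma> j) n) \<circ> \<rho>) \<longlonglongrightarrow> l'"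
    using bounded_imp_convergent_subsequence by blast
  show ?case
  proof (intro exI conjI allI impI)
    show "strict_mono (\<sigma> \<circ> \<rho>)" using \<sigma>(1) \<rho>(1) by (rule strict_mono_o)
    fix i assume i: "i < Suc n"
    show "(\<lambda>j. F ((\<sigma> \<circ> \<rho>) j) i) \<longlonglongrightarrow> (l(n := l')) i"
    proof (cases "i = n")
      case True
      then show ?thesis using \<rho>(2) by (simp add: o_def)
    next
      case False
      then have "i < n" using i by simp
      from LIMSEQ_subseq_LIMSEQ[OF \<sigma>(2)[OF this] \<rho>(1)] False show ?thesis by (simp add: o_def)
    qed
  qed
qed

lemma orth_span:
  fixes e :: "nat \<Rightarrow> 'a::euclidean_space"
  assumes "\<And>i. i < r \<Longrightarrow> e i \<bullet> v = 0" "u \<in> span (e ` {..<r})"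
  shows "u \<bullet> v = 0"
proof -
  have "orthogonal v u"
    by (rule orthogonal_to_span[OF assms(2)]) (use assms(1) in \<open>auto simp: orthogonal_def inner_commute\<close>)
  then show ?thesis by (simp add: orthogonal_def inner_commute)
qed

definition orthonormal_frame :: "nat \<Rightarrow> (nat \<Rightarrow> 'a::euclidean_space) \<Rightarrow> bool" where
  "orthonormal_frame r e \<longleftrightarrow> (\<forall>i<r. \<forall>i'<r. e i \<bullet> e i' = (if i = i' then 1 else 0))"

lemma frame_expand:
  fixes e :: "nat \<Rightarrow> 'a::euclidean_space"
  assumes on: "orthonormal_frame r e" and u: "u \<in> span (e ` {..<r})"
  shows "u = (\<Sum>i<r. (u \<bullet> e i) *\<^sub>R e i)"
proof -
  define w where "w = u - (\<Sum>i<r. (u \<bullet> e i) *\<^sub>R e i)"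
  have we: "e j \<bullet> w = 0" if j: "j < r" for j
  proof -
    have "e j \<bullet> (\<Sum>i<r. (u \<bullet> e i) *\<^sub>R e i) = (\<Sum>i<r. (u \<bullet> e i) * (e j \<bullet> e i))"
      by (simp add: inner_sum_right)
    also have "\<dots> = (\<Sum>i<r. (if i = j then u \<bullet> e j else 0))"
      using on j unfolding orthonormal_frame_def by (intro sum.cong refl) auto
    also have "\<dots> = u \<bullet> e j" using j by simp
    finally show ?thesis unfolding w_def by (simp add: inner_diff_right inner_commute)
  qed
  have "w \<in> span (e ` {..<r})" unfolding w_def
    by (intro span_diff u span_sum span_mul span_base) auto
  then have "w \<bullet> w = 0" using orth_span[of r e w w] we by blast
  then show ?thesis unfolding w_def by simp
qed

lemma frame_dim:
  fixes e :: "nat \<Rightarrow> 'a::euclidean_space"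
  assumes on: "orthonormal_frame r e"
  shows "dim (span (e ` {..<r})) = r"
proof -
  have inj: "inj_on e {..<r}"
  proof (rule inj_onI)
    fix i i' assume "i \<in> {..<r}" "i' \<in> {..<r}" "e i = e i'"
    then show "i = i'" using on unfolding orthonormal_frame_def by (metis lessThan_iff zero_neq_one)
  qed
  have "pairwise orthogonal (e ` {..<r})"
    using on unfolding orthonormal_frame_def pairwise_def orthogonal_def by auto
  moreover have "0 \<notin> e ` {..<r}" using on unfolding orthonormal_frame_def by force
  ultimately have "independent (e ` {..<r})" by (rule pairwise_orthogonal_independent)
  then have "dim (e ` {..<r}) = card (e ` {..<r})" by (rule dim_eq_card_independent)
  also have "\<dots> = r" using card_image[OF inj] by simp
  finally show ?thesis by (simp add: dim_span)
qed

lemma frame_exists: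
  fixes E :: "'a::euclidean_space set"
  assumes "subspace E" "dim E = r"
  shows "\<exists>e. orthonormal_frame r e \<and> (\<forall>i<r. e i \<in> E) \<and> span (e ` {..<r}) = E"
proof -
  obtain B where B: "B \<subseteq> E" "pairwise orthogonal B" "\<And>x. x \<in> B \<Longrightarrow> norm x = 1"
    "independent B" "card B = dim E" "span B = E"
    using orthonormal_basis_subspace[OF assms(1)] by metis
  have "finite B" using B(4) by (rule independent_imp_finite)
  then obtain g where g: "bij_betw g {0..<card B} B" using ex_bij_betw_nat_finite by blast
  have gB: "g ` {..<r} = B" using g B(5) assms(2) by (simp add: bij_betw_def atLeast0LessThan)
  have ginj: "inj_on g {..<r}" using g B(5) assms(2) by (simp add: bij_betw_def atLeast0LessThan)
  have "orthonormal_frame r g"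
    unfolding orthonormal_frame_def
  proof (intro allI impI)
    fix i i' assume i: "i < r" "i' < r"
    then have gi: "g i \<in> B" "g i' \<in> B" using gB by auto
    show "g i \<bullet> g i' = (if i = i' then 1 else 0)"
    proof (cases "i = i'")
      case True
      then show ?thesis using B(3)[OF gi(1)] by (simp add: dot_square_norm)
    next
      case False
      then have "g i \<noteq> g i'" using ginj i by (auto dest: inj_onD)
      then show ?thesis using B(2) gi False unfolding pairwise_def orthogonal_def by auto
    qed
  qed
  then show ?thesis using gB B(1,6) by (intro exI[of _ g]) auto
qed

context dyn2
begin

definition frame_in :: "'a \<Rightarrow> (nat \<Rightarrow> 'a) \<Rightarrow> bool" where
  "frame_in x e \<longleftrightarrow> orthonormal_frame r e \<and> (\<forall>i<r. e i \<in> T x)"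

lemma frame_good:
  assumes "x \<in> M" "frame_in x e"
  shows "good x (span (e ` {..<r}))"
proof -
  have "e ` {..<r} \<subseteq> T x" using assms(2) unfolding frame_in_def by auto
  then have "span (e ` {..<r}) \<subseteq> T x" using Tsub[OF assms(1)] by (rule span_minimal)
  then show ?thesis using assms frame_dim unfolding good_def frame_in_def by auto
qed

lemma good_frame:
  assumes "good x E"
  shows "\<exists>e. frame_in x e \<and> span (e ` {..<r}) = E"
proof -
  have E: "subspace E" "dim E = r" "E \<subseteq> T x" using assms unfolding good_def by auto
  obtain e where "orthonormal_frame r e" "\<forall>i<r. e i \<in> E" "span (e ` {..<r}) = E"
    using frame_exists[OF E(1,2)] by blast
  then show ?thesis using E(3) unfolding frame_in_def by blast
qed

lemma frame_norm: "frame_in x e \<Longrightarrow> i < r \<Longrightarrow> norm (e i) = 1"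
  unfolding frame_in_def orthonormal_frame_def by (metis norm_eq_1)

lemma limit_frame:
  assumes x: "x \<in> M" and xs: "\<And>j. xs j \<in> M" "xs \<longlonglongrightarrow> x"
    and fr: "\<And>j. frame_in (xs j) (es j)" and lim: "\<And>i. i < r \<Longrightarrow> (\<lambda>j. es j i) \<longlonglongrightarrow> e i"
  shows "frame_in x e"
  unfolding frame_in_def orthonormal_frame_def
proof (intro conjI allI impI)
  fix i assume i: "i < r"
  show "e i \<in> T x"
    by (rule Tclosed[OF x xs(1) xs(2) _ lim[OF i]]) (use fr i in \<open>auto simp: frame_in_def\<close>)
next
  fix i i' assume i: "i < r" "i' < r"
  have "(\<lambda>j. es j i \<bullet> es j i') \<longlonglongrightarrow> e i \<bullet> e i'" by (intro tendsto_inner lim i)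
  moreover have "(\<lambda>j. es j i \<bullet> es j i') = (\<lambda>j. if i = i' then 1 else 0)"
    using fr i unfolding frame_in_def orthonormal_frame_def by auto
  ultimately show "e i \<bullet> e i' = (if i = i' then 1 else 0)"
    using LIMSEQ_unique tendsto_const by metis
qed

lemma compact_good:
  fixes xs :: "nat \<Rightarrow> 'a" and Es :: "nat \<Rightarrow> 'a set"
  assumes g: "\<And>j. good (xs j) (Es j)"
  obtains \<tau> x e es where "strict_mono \<tau>" "x \<in> M" "frame_in x e" "(\<lambda>j. xs (\<tau> j)) \<longlonglongrightarrow> x"
    "\<And>j. frame_in (xs (\<tau> j)) (es j)" "\<And>j. span (es j ` {..<r}) = Es (\<tau> j)"
    "\<And>i. i < r \<Longrightarrow> (\<lambda>j. es j i) \<longlonglongrightarrow> e i"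
proof -
  obtain fr where fr: "\<And>j. frame_in (xs j) (fr j) \<and> span (fr j ` {..<r}) = Es j"
    using good_frame[OF g] by metis
  have xsM: "\<And>j. xs j \<in> M" using g unfolding good_def by auto
  define F where "F j i = (if i < r then fr j i else xs j)" for j i
  have bd: "bounded (range (\<lambda>j. F j i))" if "i < Suc r" for i
  proof (cases "i < r")
    case True
    have "norm (fr j i) = 1" for j using frame_norm fr True by blast
    then have "range (\<lambda>j. F j i) \<subseteq> cball 0 1" using True by (auto simp: F_def)
    then show ?thesis using bounded_cball bounded_subset by blast
  next
    case False
    then have "range (\<lambda>j. F j i) \<subseteq> M" using xsM by (auto simp: F_def)
    then show ?thesis using compact_imp_bounded[OF compactM] bounded_subset by blast
  qed
  have "\<exists>\<sigma> l. strict_mono (\<sigma>::nat\<Rightarrow>nat) \<and> (\<forall>i<Suc r. (\<lambda>j. F (\<sigma> j) i) \<longlonglongrightarrow> l i)"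
    by (rule multi_subseq) (rule bd)
  then obtain \<tau> l where \<tau>: "strict_mono \<tau>" "\<forall>i<Suc r. (\<lambda>j. F (\<tau> j) i) \<longlonglongrightarrow> l i"
    by blast
  have xl: "(\<lambda>j. xs (\<tau> j)) \<longlonglongrightarrow> l r" using \<tau>(2)[rule_format, of r] by (simp add: F_def)
  have el: "(\<lambda>j. fr (\<tau> j) i) \<longlonglongrightarrow> l i" if "i < r" for i using \<tau>(2)[rule_format, of i] that by (simp add: F_def)
  have xM: "l r \<in> M"
    by (rule closed_sequentially[OF compact_imp_closed[OF compactM] _ xl]) (use xsM in auto)
  have "frame_in (l r) l"
    by (rule limit_frame[OF xM _ xl _ el]) (use xsM fr in auto)
  then show thesis
    by (rule that[of \<tau> "l r" l "\<lambda>j. fr (\<tau> j)", OF \<tau>(1) xM _ xl]) (use fr el in auto)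
qed

end

context dyn2
begin

lemma W_tendsto:
  assumes "set w \<subseteq> {1..k}" "xs \<longlonglongrightarrow> x"
  shows "(\<lambda>j. W w (xs j)) \<longlonglongrightarrow> W w x"
proof -
  have "isCont (W w) x" using fw_cont[OF assms(1)] by (simp add: continuous_on_eq_continuous_at)
  from isCont_tendsto_compose[OF this assms(2)] show ?thesis .
qed

lemma DW_tendsto:
  assumes "set w \<subseteq> {1..k}" "xs \<longlonglongrightarrow> x"
  shows "(\<lambda>j. DWf w (xs j)) \<longlonglongrightarrow> DWf w x"
proof -
  have "isCont (DWf w) x" using DW_cont[OF assms(1)] by (simp add: continuous_on_eq_continuous_at)
  from isCont_tendsto_compose[OF this assms(2)] show ?thesis .
qed

lemma STw_usc:
  fixes xs :: "nat \<Rightarrow> 'a" and es :: "nat \<Rightarrow> nat \<Rightarrow> 'a"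
  assumes x: "x \<in> M" "frame_in x e" and xs: "\<And>j. xs j \<in> M" "\<And>j. frame_in (xs j) (es j)" "xs \<longlonglongrightarrow> x"
    and lim: "\<And>i. i < r \<Longrightarrow> (\<lambda>j. es j i) \<longlonglongrightarrow> e i" and w: "set w \<subseteq> {1..k}" and \<epsilon>: "\<epsilon> > 0"
  shows "eventually (\<lambda>j. STw (xs j) (span (es j ` {..<r})) w \<le> STw x (span (e ` {..<r})) w + \<epsilon>) sequentially"
proof (rule ccontr)
  define E where "E = span (e ` {..<r})"
  define Es where "Es j = span (es j ` {..<r})" for j
  define S where "S = STw x E w"
  let ?A = "\<lambda>y. blinfun_apply (DWf w y)"
  assume "\<not> ?thesis"
  then have "frequently (\<lambda>j. S + \<epsilon> < STw (xs j) (Es j) w) sequentially"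
    unfolding S_def E_def Es_def not_eventually by (simp add: not_le)
  then obtain \<tau> :: "nat \<Rightarrow> nat" where \<tau>: "strict_mono \<tau>" "\<And>j. S + \<epsilon> < STw (xs (\<tau> j)) (Es (\<tau> j)) w"
    using subseq_frequently by blast
  have gj: "good (xs j) (Es j)" for j unfolding Es_def by (rule frame_good[OF xs(1,2)])
  have g: "good x E" unfolding E_def by (rule frame_good[OF x])
  have S0: "0 \<le> S" unfolding S_def using STw_pos[OF g w] by simp
  have ex: "\<exists>v g. v \<in> unit_vecs (orth_compl_in (T (xs (\<tau> j))) (Es (\<tau> j))) \<and>
     g \<in> orth_compl_in (T (W w (xs (\<tau> j)))) (?A (xs (\<tau> j)) ` Es (\<tau> j)) \<and> norm g = 1 \<and>
     S + \<epsilon> < ?A (xs (\<tau> j)) v \<bullet> g" for j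
  proof -
    let ?y = "xs (\<tau> j)"
    let ?G = "orth_compl_in (T (W w ?y)) (?A ?y ` Es (\<tau> j))"
    have yM: "W w ?y \<in> M" using fw_M[OF w xs(1)] .
    have sG: "subspace ?G" by (rule subspace_orth_compl_in[OF Tsub[OF yM]])
    have "S + \<epsilon> < (SUP v\<in>unit_vecs (orth_compl_in (T ?y) (Es (\<tau> j))). norm (proj_onto ?G (?A ?y v)))"
      using \<tau>(2)[of j] unfolding STw_def ST_def .
    then obtain v where v: "v \<in> unit_vecs (orth_compl_in (T ?y) (Es (\<tau> j)))"
      and vb: "S + \<epsilon> < norm (proj_onto ?G (?A ?y v))"
      using less_cSUP_iff[OF good_ne_orth[OF gj] ST_bdd[OF lin_bl Tsub[OF yM]]] by blast
    define z where "z = proj_onto ?G (?A ?y v)"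
    have zG: "z \<in> ?G" unfolding z_def by (rule proj_props(1)[OF sG])
    have zn: "z \<noteq> 0" using vb S0 \<epsilon> unfolding z_def by auto
    define gg where "gg = (1 / norm z) *\<^sub>R z"
    have ggG: "gg \<in> ?G" unfolding gg_def using zG sG by (simp add: subspace_scale)
    have ggn: "norm gg = 1" unfolding gg_def using zn by simp
    have "?A ?y v \<bullet> gg = z \<bullet> gg" unfolding z_def by (rule proj_dot[OF sG ggG])
    also have "\<dots> = norm z" unfolding gg_def using zn by (simp add: dot_square_norm power2_eq_square)
    finally show ?thesis using v ggG ggn vb unfolding z_def by (intro exI[of _ v] exI[of _ gg]) auto
  qed
  obtain V Gv where VG: "\<And>j. V j \<in> unit_vecs (orth_compl_in (T (xs (\<tau> j))) (Es (\<tau> j)))"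
    "\<And>j. Gv j \<in> orth_compl_in (T (W w (xs (\<tau> j)))) (?A (xs (\<tau> j)) ` Es (\<tau> j))"
    "\<And>j. norm (Gv j) = 1" "\<And>j. S + \<epsilon> < ?A (xs (\<tau> j)) (V j) \<bullet> Gv j"
    using ex by metis
  define F where "F j i = (if i = 0 then V j else Gv j)" for j i :: nat
  have bd: "bounded (range (\<lambda>j. F j i))" if "i < 2" for i
  proof -
    have "range (\<lambda>j. F j i) \<subseteq> cball 0 1" using VG(1,3) by (auto simp: F_def unit_vecs_def)
    then show ?thesis using bounded_cball bounded_subset by blast
  qed
  have "\<exists>\<sigma> l. strict_mono (\<sigma>::nat\<Rightarrow>nat) \<and> (\<forall>i<2. (\<lambda>j. F (\<sigma> j) i) \<longlonglongrightarrow> l i)"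
    by (rule multi_subseq) (rule bd)
  then obtain \<rho> l where \<rho>: "strict_mono \<rho>" "\<forall>i<2. (\<lambda>j. F (\<rho> j) i) \<longlonglongrightarrow> l i" by blast
  define v where "v = l 0"
  define gl where "gl = l 1"
  have Vl: "(\<lambda>j. V (\<rho> j)) \<longlonglongrightarrow> v" using \<rho>(2)[rule_format, of 0] by (simp add: F_def v_def)
  have Gl: "(\<lambda>j. Gv (\<rho> j)) \<longlonglongrightarrow> gl" using \<rho>(2)[rule_format, of 1] by (simp add: F_def gl_def)
  have \<phi>: "strict_mono (\<tau> \<circ> \<rho>)" using \<tau>(1) \<rho>(1) by (rule strict_mono_o)
  have x\<phi>: "(\<lambda>j. xs (\<tau> (\<rho> j))) \<longlonglongrightarrow> x" using LIMSEQ_subseq_LIMSEQ[OF xs(3) \<phi>] by (simp add: o_def)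
  have e\<phi>: "(\<lambda>j. es (\<tau> (\<rho> j)) i) \<longlonglongrightarrow> e i" if "i < r" for i
    using LIMSEQ_subseq_LIMSEQ[OF lim[OF that] \<phi>] by (simp add: o_def)
  have Vn: "norm (V j) = 1" for j using VG(1) by (simp add: unit_vecs_def)
  have VT: "V j \<in> T (xs (\<tau> j))" for j using VG(1) by (simp add: unit_vecs_def orth_compl_in_def)
  have Vperp: "u \<bullet> V j = 0" if "u \<in> Es (\<tau> j)" for u j using VG(1) that by (simp add: unit_vecs_def orth_compl_in_def)
  have GT: "Gv j \<in> T (W w (xs (\<tau> j)))" for j using VG(2) by (simp add: orth_compl_in_def)
  have Gperp: "u \<bullet> Gv j = 0" if "u \<in> ?A (xs (\<tau> j)) ` Es (\<tau> j)" for u j using VG(2)[of j] that by (auto simp: orth_compl_in_def)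
  have vn: "norm v = 1"
  proof -
    have "(\<lambda>j. norm (V (\<rho> j))) \<longlonglongrightarrow> norm v" by (intro tendsto_intros Vl)
    then show ?thesis using Vn LIMSEQ_unique[OF _ tendsto_const[of 1]] by simp
  qed
  have vT: "v \<in> T x" by (rule Tclosed[OF x(1) _ x\<phi> _ Vl]) (use xs(1) VT in auto)
  have ev: "e i \<bullet> v = 0" if i: "i < r" for i
  proof -
    have "(\<lambda>j. es (\<tau> (\<rho> j)) i \<bullet> V (\<rho> j)) \<longlonglongrightarrow> e i \<bullet> v" by (intro tendsto_intros e\<phi> i Vl)
    moreover have "es (\<tau> (\<rho> j)) i \<bullet> V (\<rho> j) = 0" for j
      by (rule Vperp) (use i in \<open>auto simp: Es_def intro: span_base\<close>)
    ultimately show ?thesis using LIMSEQ_unique[OF _ tendsto_const[of 0]] by simp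
  qed
  have vU: "v \<in> unit_vecs (orth_compl_in (T x) E)"
    unfolding unit_vecs_def orth_compl_in_def E_def using vT vn orth_span[OF ev] by auto
  define x' where "x' = W w x"
  have x'M: "x' \<in> M" unfolding x'_def by (rule fw_M[OF w x(1)])
  have x'l: "(\<lambda>j. W w (xs (\<tau> (\<rho> j)))) \<longlonglongrightarrow> x'" unfolding x'_def by (rule W_tendsto[OF w x\<phi>])
  have Al: "(\<lambda>j. DWf w (xs (\<tau> (\<rho> j)))) \<longlonglongrightarrow> DWf w x" by (rule DW_tendsto[OF w x\<phi>])
  have gn: "norm gl = 1"
  proof -
    have "(\<lambda>j. norm (Gv (\<rho> j))) \<longlonglongrightarrow> norm gl" by (intro tendsto_intros Gl)
    then show ?thesis using VG(3) LIMSEQ_unique[OF _ tendsto_const[of 1]] by simp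
  qed
  have gT: "gl \<in> T x'" by (rule Tclosed[OF x'M _ x'l _ Gl]) (use fw_M[OF w xs(1)] GT in auto)
  have ag: "?A x (e i) \<bullet> gl = 0" if i: "i < r" for i
  proof -
    have "(\<lambda>j. ?A (xs (\<tau> (\<rho> j))) (es (\<tau> (\<rho> j)) i) \<bullet> Gv (\<rho> j)) \<longlonglongrightarrow> ?A x (e i) \<bullet> gl"
      by (intro tendsto_intros e\<phi> i Gl Al)
    moreover have "?A (xs (\<tau> (\<rho> j))) (es (\<tau> (\<rho> j)) i) \<bullet> Gv (\<rho> j) = 0" for j
      by (rule Gperp) (use i in \<open>auto simp: Es_def intro: span_base\<close>)
    ultimately show ?thesis using LIMSEQ_unique[OF _ tendsto_const[of 0]] by simp
  qed
  define G where "G = orth_compl_in (T x') (?A x ` E)"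
  have sG: "subspace G" unfolding G_def by (rule subspace_orth_compl_in[OF Tsub[OF x'M]])
  have gG: "gl \<in> G"
  proof -
    have "u \<bullet> gl = 0" if "u \<in> ?A x ` E" for u
    proof -
      have "?A x ` E = span ((\<lambda>i. ?A x (e i)) ` {..<r})"
        unfolding E_def span_linear_image[OF lin_bl, symmetric] by (simp add: image_comp o_def)
      then show ?thesis using orth_span[of r "\<lambda>i. ?A x (e i)" gl u, OF ag] that by auto
    qed
    then show ?thesis unfolding G_def orth_compl_in_def using gT by auto
  qed
  have "(\<lambda>j. ?A (xs (\<tau> (\<rho> j))) (V (\<rho> j)) \<bullet> Gv (\<rho> j)) \<longlonglongrightarrow> ?A x v \<bullet> gl"
    by (intro tendsto_intros Vl Gl Al)
  then have "S + \<epsilon> \<le> ?A x v \<bullet> gl"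
    by (rule LIMSEQ_le_const) (use VG(4) less_imp_le in blast)
  also have "?A x v \<bullet> gl = proj_onto G (?A x v) \<bullet> gl" by (rule proj_dot[OF sG gG])
  also have "\<dots> \<le> norm (proj_onto G (?A x v)) * norm gl" by (rule norm_cauchy_schwarz)
  also have "\<dots> = norm (proj_onto G (?A x v))" using gn by simp
  also have "\<dots> \<le> S" unfolding S_def STw_def G_def x'_def
    by (rule ST_upper[OF lin_bl Tsub[OF fw_M[OF w x(1)]] vU])
  finally show False using \<epsilon> by simp
qed

lemma IAw_lsc:
  fixes xs :: "nat \<Rightarrow> 'a" and es :: "nat \<Rightarrow> nat \<Rightarrow> 'a"
  assumes x: "x \<in> M" "frame_in x e" and xs: "\<And>j. xs j \<in> M" "\<And>j. frame_in (xs j) (es j)" "xs \<longlonglongrightarrow> x"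
    and lim: "\<And>i. i < r \<Longrightarrow> (\<lambda>j. es j i) \<longlonglongrightarrow> e i" and w: "set w \<subseteq> {1..k}" and \<epsilon>: "\<epsilon> > 0"
  shows "eventually (\<lambda>j. IAw x (span (e ` {..<r})) w - \<epsilon> \<le> IAw (xs j) (span (es j ` {..<r})) w) sequentially"
proof (rule ccontr)
  define E where "E = span (e ` {..<r})"
  define Es where "Es j = span (es j ` {..<r})" for j
  define S where "S = IAw x E w"
  let ?A = "\<lambda>y. blinfun_apply (DWf w y)"
  assume "\<not> ?thesis"
  then have "frequently (\<lambda>j. IAw (xs j) (Es j) w < S - \<epsilon>) sequentially"
    unfolding S_def E_def Es_def not_eventually by (simp add: not_le)
  then obtain \<tau> :: "nat \<Rightarrow> nat" where \<tau>: "strict_mono \<tau>" "\<And>j. IAw (xs (\<tau> j)) (Es (\<tau> j)) w < S - \<epsilon>"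
    using subseq_frequently by blast
  have gj: "good (xs j) (Es j)" for j unfolding Es_def by (rule frame_good[OF xs(1,2)])
  have g: "good x E" unfolding E_def by (rule frame_good[OF x])
  have ex: "\<exists>u. u \<in> unit_vecs (Es (\<tau> j)) \<and> norm (?A (xs (\<tau> j)) u) < S - \<epsilon>" for j
  proof -
    have "(INF u\<in>unit_vecs (Es (\<tau> j)). norm (?A (xs (\<tau> j)) u)) < S - \<epsilon>"
      using \<tau>(2)[of j] unfolding IAw_def IA_def .
    then show ?thesis using cINF_less_iff[OF good_ne_E[OF gj] IA_bdd] by blast
  qed
  obtain U where U: "\<And>j. U j \<in> unit_vecs (Es (\<tau> j))" "\<And>j. norm (?A (xs (\<tau> j)) (U j)) < S - \<epsilon>"
    using ex by metis
  have "bounded (range U)"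
  proof -
    have "range U \<subseteq> cball 0 1" using U(1) by (auto simp: unit_vecs_def)
    then show ?thesis using bounded_cball bounded_subset by blast
  qed
  then obtain u \<rho> where \<rho>: "strict_mono (\<rho>::nat\<Rightarrow>nat)" "(U \<circ> \<rho>) \<longlonglongrightarrow> u"
    using bounded_imp_convergent_subsequence by blast
  have Ul: "(\<lambda>j. U (\<rho> j)) \<longlonglongrightarrow> u" using \<rho>(2) by (simp add: o_def)
  have \<phi>: "strict_mono (\<tau> \<circ> \<rho>)" using \<tau>(1) \<rho>(1) by (rule strict_mono_o)
  have x\<phi>: "(\<lambda>j. xs (\<tau> (\<rho> j))) \<longlonglongrightarrow> x" using LIMSEQ_subseq_LIMSEQ[OF xs(3) \<phi>] by (simp add: o_def)
  have e\<phi>: "(\<lambda>j. es (\<tau> (\<rho> j)) i) \<longlonglongrightarrow> e i" if "i < r" for i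
    using LIMSEQ_subseq_LIMSEQ[OF lim[OF that] \<phi>] by (simp add: o_def)
  have un: "norm u = 1"
  proof -
    have "(\<lambda>j. norm (U (\<rho> j))) \<longlonglongrightarrow> norm u" by (intro tendsto_intros Ul)
    then show ?thesis using U(1) LIMSEQ_unique[OF _ tendsto_const[of 1]] by (simp add: unit_vecs_def)
  qed
  have exp: "U j = (\<Sum>i<r. (U j \<bullet> es (\<tau> j) i) *\<^sub>R es (\<tau> j) i)" for j
    by (rule frame_expand) (use xs(2) U(1) in \<open>auto simp: frame_in_def unit_vecs_def Es_def\<close>)
  have "(\<lambda>j. \<Sum>i<r. (U (\<rho> j) \<bullet> es (\<tau> (\<rho> j)) i) *\<^sub>R es (\<tau> (\<rho> j)) i) \<longlonglongrightarrow> (\<Sum>i<r. (u \<bullet> e i) *\<^sub>R e i)"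
    by (intro tendsto_intros Ul e\<phi>) auto
  moreover have "(\<lambda>j. U (\<rho> j)) = (\<lambda>j. \<Sum>i<r. (U (\<rho> j) \<bullet> es (\<tau> (\<rho> j)) i) *\<^sub>R es (\<tau> (\<rho> j)) i)"
    by (rule ext) (rule exp)
  ultimately have "(\<lambda>j. U (\<rho> j)) \<longlonglongrightarrow> (\<Sum>i<r. (u \<bullet> e i) *\<^sub>R e i)" by simp
  then have ueq: "u = (\<Sum>i<r. (u \<bullet> e i) *\<^sub>R e i)" using Ul LIMSEQ_unique by blast
  have uE: "u \<in> E" unfolding E_def by (subst ueq) (intro span_sum span_mul span_base; auto)
  have uU: "u \<in> unit_vecs E" using uE un by (simp add: unit_vecs_def)
  have "(\<lambda>j. norm (?A (xs (\<tau> (\<rho> j))) (U (\<rho> j)))) \<longlonglongrightarrow> norm (?A x u)"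
    by (intro tendsto_intros Ul DW_tendsto[OF w x\<phi>])
  then have "norm (?A x u) \<le> S - \<epsilon>"
    by (rule LIMSEQ_le_const2) (use U(2) less_imp_le in blast)
  moreover have "S \<le> norm (?A x u)" unfolding S_def IAw_def by (rule IA_lower_elem[OF uU])
  ultimately show False using \<epsilon> by simp
qed

end

lemma avg_add_const:
  assumes "k \<ge> 1"
  shows "avg k n (\<lambda>xs. G xs + c) = avg k n G + c"
  unfolding avg_def using assms by (simp add: sum.distrib card_words add_divide_distrib)

lemma ln_add_le:
  fixes a \<epsilon> :: real
  assumes "a > 0" "\<epsilon> \<ge> 0"
  shows "ln (a + \<epsilon>) \<le> ln a + \<epsilon> / a"
proof -
  have "ln ((a + \<epsilon>) / a) \<le> (a + \<epsilon>) / a - 1" using assms by (intro ln_le_minus_one) auto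
  moreover have "ln ((a + \<epsilon>) / a) = ln (a + \<epsilon>) - ln a" using assms by (simp add: ln_div)
  moreover have "(a + \<epsilon>) / a - 1 = \<epsilon> / a" using assms by (simp add: field_simps)
  ultimately show ?thesis by simp
qed

lemma ln_sub_ge:
  fixes a \<epsilon> :: real
  assumes "a - \<epsilon> > 0" "\<epsilon> \<ge> 0"
  shows "ln a - \<epsilon> / (a - \<epsilon>) \<le> ln (a - \<epsilon>)"
proof -
  have "ln (a / (a - \<epsilon>)) \<le> a / (a - \<epsilon>) - 1" using assms by (intro ln_le_minus_one) auto
  moreover have "a / (a - \<epsilon>) - 1 = \<epsilon> / (a - \<epsilon>)" using assms by (simp add: field_simps)
  ultimately show ?thesis using assms by (simp add: ln_div)
qed

context dyn2
begin

lemma eventually_tau_small: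
  assumes "strict_mono (\<tau>::nat\<Rightarrow>nat)" "\<eta> > 0"
  shows "eventually (\<lambda>j. 1 / (real (\<tau> j) + 1) < \<eta>) sequentially"
proof -
  obtain N :: nat where N: "1 / \<eta> < N" using reals_Archimedean2 by blast
  show ?thesis unfolding eventually_sequentially
  proof (intro exI allI impI)
    fix j assume "N \<le> j"
    then have "real N \<le> real (\<tau> j)" using seq_suble[OF assms(1), of j] by simp
    then have "1 / \<eta> < real (\<tau> j) + 1" using N by simp
    then show "1 / (real (\<tau> j) + 1) < \<eta>" using assms(2)
      by (simp add: field_simps)
  qed
qed

lemma gap_C:
  assumes k: "k \<ge> 1"
    and hyp: "\<And>x E. good x E \<Longrightarrow> avg k n0 (\<lambda>xs. ln (STw x E xs)) < c"
  shows "\<exists>\<delta>>0. \<forall>x E. good x E \<longrightarrow> avg k n0 (\<lambda>xs. ln (STw x E xs)) \<le> c - \<delta>"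
proof (rule ccontr)
  let ?C = "\<lambda>x E. avg k n0 (\<lambda>xs. ln (STw x E xs))"
  assume nt: "\<not> ?thesis"
  have nd: "\<forall>\<delta>>0. \<exists>x E. good x E \<and> c - \<delta> < ?C x E"
  proof (intro allI impI)
    fix \<delta> :: real assume d0: "\<delta> > 0"
    show "\<exists>x E. good x E \<and> c - \<delta> < ?C x E"
    proof (rule ccontr)
      assume a: "\<not> (\<exists>x E. good x E \<and> c - \<delta> < ?C x E)"
      have "good x E \<longrightarrow> ?C x E \<le> c - \<delta>" for x E using a by (meson not_le)
      then have "\<exists>\<delta>>0. \<forall>x E. good x E \<longrightarrow> ?C x E \<le> c - \<delta>" using d0 by blast
      then show False using nt by blast
    qed
  qed
  have "\<forall>j::nat. \<exists>p. good (fst p) (snd p) \<and> c - 1 / (real j + 1) < ?C (fst p) (snd p)"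
  proof
    fix j :: nat
    have "(1::real) / (real j + 1) > 0" by simp
    from nd[rule_format, OF this] obtain x E where "good x E" "c - 1 / (real j + 1) < ?C x E" by blast
    then show "\<exists>p. good (fst p) (snd p) \<and> c - 1 / (real j + 1) < ?C (fst p) (snd p)" by (intro exI[of _ "(x, E)"]) simp
  qed
  then have "\<exists>P. \<forall>j. good (fst (P j)) (snd (P j)) \<and> c - 1 / (real j + 1) < ?C (fst (P j)) (snd (P j))"
    by (rule choice)
  then obtain P where P: "\<forall>j. good (fst (P j)) (snd (P j)) \<and> c - 1 / (real j + 1) < ?C (fst (P j)) (snd (P j))" ..
  define xs where "xs j = fst (P j)" for j
  define Es where "Es j = snd (P j)" for j
  have xsE: "\<And>j. good (xs j) (Es j)" "\<And>j. c - 1 / (real j + 1) < ?C (xs j) (Es j)"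
    using P unfolding xs_def Es_def by auto
  obtain \<tau> x e es where cg: "strict_mono \<tau>" "x \<in> M" "frame_in x e" "(\<lambda>j. xs (\<tau> j)) \<longlonglongrightarrow> x"
    "\<And>j. frame_in (xs (\<tau> j)) (es j)" "\<And>j. span (es j ` {..<r}) = Es (\<tau> j)" "\<And>i. i < r \<Longrightarrow> (\<lambda>j. es j i) \<longlonglongrightarrow> e i"
    by (rule compact_good[of xs Es, OF xsE(1)]) (rule that)
  define E where "E = span (e ` {..<r})"
  have g: "good x E" unfolding E_def by (rule frame_good[OF cg(2,3)])
  define \<eta> where "\<eta> = c - ?C x E"
  have \<eta>: "\<eta> > 0" using hyp[OF g] by (simp add: \<eta>_def)
  define a0 where "a0 = 1 / Lb ^ n0"
  have a0: "a0 > 0" using Lb(1) by (simp add: a0_def)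
  define \<epsilon> where "\<epsilon> = a0 * \<eta> / 2"
  have \<epsilon>: "\<epsilon> > 0" using a0 \<eta> by (simp add: \<epsilon>_def)
  have xsM: "\<And>j. xs (\<tau> j) \<in> M" using xsE(1) unfolding good_def by auto
  have ev: "eventually (\<lambda>j. \<forall>w\<in>words k n0. STw (xs (\<tau> j)) (Es (\<tau> j)) w \<le> STw x E w + \<epsilon>) sequentially"
  proof (rule eventually_ball_finite[OF finite_words], rule ballI)
    fix w assume w: "w \<in> words k n0"
    have "eventually (\<lambda>j. STw (xs (\<tau> j)) (span (es j ` {..<r})) w \<le> STw x (span (e ` {..<r})) w + \<epsilon>) sequentially"
      by (rule STw_usc[OF cg(2,3) xsM _ cg(4) _ words_set(1)[OF w] \<epsilon>]) (use cg(5,7) in auto)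
    then show "eventually (\<lambda>j. STw (xs (\<tau> j)) (Es (\<tau> j)) w \<le> STw x E w + \<epsilon>) sequentially"
      using cg(6) unfolding E_def by simp
  qed
  obtain j where j1: "\<forall>w\<in>words k n0. STw (xs (\<tau> j)) (Es (\<tau> j)) w \<le> STw x E w + \<epsilon>"
    and j2: "1 / (real (\<tau> j) + 1) < \<eta> / 2"
    using eventually_happens'[OF _ eventually_conj[OF ev eventually_tau_small[OF cg(1), of "\<eta>/2"]]] \<eta> by auto
  have gj: "good (xs (\<tau> j)) (Es (\<tau> j))" by (rule xsE(1))
  have "?C (xs (\<tau> j)) (Es (\<tau> j)) \<le> avg k n0 (\<lambda>w. ln (STw x E w) + \<eta> / 2)"
  proof (rule avg_mono)
    fix w assume w: "w \<in> words k n0"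
    have p: "0 < STw x E w" by (rule STw_pos[OF g words_set(1)[OF w]])
    have lo: "a0 \<le> STw x E w" using STw_lower[OF g words_set(1)[OF w]] words_set(2)[OF w] by (simp add: a0_def)
    have "ln (STw (xs (\<tau> j)) (Es (\<tau> j)) w) \<le> ln (STw x E w + \<epsilon>)"
      using j1 w STw_pos[OF gj words_set(1)[OF w]] by auto
    also have "\<dots> \<le> ln (STw x E w) + \<epsilon> / STw x E w" by (rule ln_add_le[OF p]) (use \<epsilon> in simp)
    also have "\<epsilon> / STw x E w \<le> \<epsilon> / a0" using lo a0 \<epsilon> by (intro divide_left_mono) auto
    also have "\<epsilon> / a0 = \<eta> / 2" using a0 by (simp add: \<epsilon>_def)
    finally show "ln (STw (xs (\<tau> j)) (Es (\<tau> j)) w) \<le> ln (STw x E w) + \<eta> / 2" by simp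
  qed
  also have "\<dots> = ?C x E + \<eta> / 2" by (rule avg_add_const[OF k])
  also have "\<dots> = c - \<eta> / 2" unfolding \<eta>_def by (simp add: field_simps)
  finally have "?C (xs (\<tau> j)) (Es (\<tau> j)) \<le> c - \<eta> / 2" .
  moreover have "c - 1 / (real (\<tau> j) + 1) < ?C (xs (\<tau> j)) (Es (\<tau> j))" by (rule xsE(2))
  ultimately show False using j2 by simp
qed

lemma gap_D:
  assumes k: "k \<ge> 1"
    and hyp: "\<And>x E. good x E \<Longrightarrow> c < avg k n0 (\<lambda>xs. ln (IAw x E xs))"
  shows "\<exists>\<delta>>0. \<forall>x E. good x E \<longrightarrow> c + \<delta> \<le> avg k n0 (\<lambda>xs. ln (IAw x E xs))"
proof (rule ccontr)
  let ?C = "\<lambda>x E. avg k n0 (\<lambda>xs. ln (IAw x E xs))"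
  assume nt: "\<not> ?thesis"
  have nd: "\<forall>\<delta>>0. \<exists>x E. good x E \<and> ?C x E < c + \<delta>"
  proof (intro allI impI)
    fix \<delta> :: real assume d0: "\<delta> > 0"
    show "\<exists>x E. good x E \<and> ?C x E < c + \<delta>"
    proof (rule ccontr)
      assume a: "\<not> (\<exists>x E. good x E \<and> ?C x E < c + \<delta>)"
      have "good x E \<longrightarrow> c + \<delta> \<le> ?C x E" for x E using a by (meson not_le)
      then have "\<exists>\<delta>>0. \<forall>x E. good x E \<longrightarrow> c + \<delta> \<le> ?C x E" using d0 by blast
      then show False using nt by blast
    qed
  qed
  have "\<forall>j::nat. \<exists>p. good (fst p) (snd p) \<and> ?C (fst p) (snd p) < c + 1 / (real j + 1)"
  proof
    fix j :: nat
    have "(1::real) / (real j + 1) > 0" by simp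
    from nd[rule_format, OF this] obtain x E where "good x E" "?C x E < c + 1 / (real j + 1)" by blast
    then show "\<exists>p. good (fst p) (snd p) \<and> ?C (fst p) (snd p) < c + 1 / (real j + 1)" by (intro exI[of _ "(x, E)"]) simp
  qed
  then have "\<exists>P. \<forall>j. good (fst (P j)) (snd (P j)) \<and> ?C (fst (P j)) (snd (P j)) < c + 1 / (real j + 1)"
    by (rule choice)
  then obtain P where P: "\<forall>j. good (fst (P j)) (snd (P j)) \<and> ?C (fst (P j)) (snd (P j)) < c + 1 / (real j + 1)" ..
  define xs where "xs j = fst (P j)" for j
  define Es where "Es j = snd (P j)" for j
  have xsE: "\<And>j. good (xs j) (Es j)" "\<And>j. ?C (xs j) (Es j) < c + 1 / (real j + 1)"
    using P unfolding xs_def Es_def by auto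
  obtain \<tau> x e es where cg: "strict_mono \<tau>" "x \<in> M" "frame_in x e" "(\<lambda>j. xs (\<tau> j)) \<longlonglongrightarrow> x"
    "\<And>j. frame_in (xs (\<tau> j)) (es j)" "\<And>j. span (es j ` {..<r}) = Es (\<tau> j)" "\<And>i. i < r \<Longrightarrow> (\<lambda>j. es j i) \<longlonglongrightarrow> e i"
    by (rule compact_good[of xs Es, OF xsE(1)]) (rule that)
  define E where "E = span (e ` {..<r})"
  have g: "good x E" unfolding E_def by (rule frame_good[OF cg(2,3)])
  define \<eta> where "\<eta> = ?C x E - c"
  have \<eta>: "\<eta> > 0" using hyp[OF g] by (simp add: \<eta>_def)
  define a0 where "a0 = 1 / Lb ^ n0"
  have a0: "a0 > 0" using Lb(1) by (simp add: a0_def)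
  define \<epsilon> where "\<epsilon> = min (a0 / 2) (a0 * \<eta> / 4)"
  have \<epsilon>: "\<epsilon> > 0" "\<epsilon> \<le> a0 / 2" "\<epsilon> \<le> a0 * \<eta> / 4" using a0 \<eta> by (auto simp: \<epsilon>_def)
  have xsM: "\<And>j. xs (\<tau> j) \<in> M" using xsE(1) unfolding good_def by auto
  have ev: "eventually (\<lambda>j. \<forall>w\<in>words k n0. IAw x E w - \<epsilon> \<le> IAw (xs (\<tau> j)) (Es (\<tau> j)) w) sequentially"
  proof (rule eventually_ball_finite[OF finite_words], rule ballI)
    fix w assume w: "w \<in> words k n0"
    have "eventually (\<lambda>j. IAw x (span (e ` {..<r})) w - \<epsilon> \<le> IAw (xs (\<tau> j)) (span (es j ` {..<r})) w) sequentially"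
      by (rule IAw_lsc[OF cg(2,3) xsM _ cg(4) _ words_set(1)[OF w] \<epsilon>(1)]) (use cg(5,7) in auto)
    then show "eventually (\<lambda>j. IAw x E w - \<epsilon> \<le> IAw (xs (\<tau> j)) (Es (\<tau> j)) w) sequentially"
      using cg(6) unfolding E_def by simp
  qed
  obtain j where j1: "\<forall>w\<in>words k n0. IAw x E w - \<epsilon> \<le> IAw (xs (\<tau> j)) (Es (\<tau> j)) w"
    and j2: "1 / (real (\<tau> j) + 1) < \<eta> / 2"
    using eventually_happens'[OF _ eventually_conj[OF ev eventually_tau_small[OF cg(1), of "\<eta>/2"]]] \<eta> by auto
  have "avg k n0 (\<lambda>w. ln (IAw x E w) + (- (\<eta> / 2))) \<le> ?C (xs (\<tau> j)) (Es (\<tau> j))"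
  proof (rule avg_mono)
    fix w assume w: "w \<in> words k n0"
    have lo: "a0 \<le> IAw x E w" using IAw_lower[OF g words_set(1)[OF w]] words_set(2)[OF w] by (simp add: a0_def)
    have p: "a0 / 2 \<le> IAw x E w - \<epsilon>" using lo \<epsilon>(2) by simp
    have p': "0 < IAw x E w - \<epsilon>" using p a0 by simp
    have "ln (IAw x E w) - \<eta> / 2 \<le> ln (IAw x E w) - \<epsilon> / (IAw x E w - \<epsilon>)"
    proof -
      have "\<epsilon> / (IAw x E w - \<epsilon>) \<le> \<epsilon> / (a0 / 2)" using p a0 \<epsilon>(1) by (intro divide_left_mono) auto
      also have "\<dots> \<le> (a0 * \<eta> / 4) / (a0 / 2)" using \<epsilon>(3) a0 by (intro divide_right_mono) auto
      also have "\<dots> = \<eta> / 2" using a0 by (simp add: field_simps)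
      finally show ?thesis by simp
    qed
    also have "\<dots> \<le> ln (IAw x E w - \<epsilon>)" by (rule ln_sub_ge[OF p']) (use \<epsilon> in simp)
    also have "\<dots> \<le> ln (IAw (xs (\<tau> j)) (Es (\<tau> j)) w)" using j1 w p' by auto
    finally show "ln (IAw x E w) + - (\<eta> / 2) \<le> ln (IAw (xs (\<tau> j)) (Es (\<tau> j)) w)" by simp
  qed
  moreover have "avg k n0 (\<lambda>w. ln (IAw x E w) + (- (\<eta> / 2))) = c + \<eta> / 2"
    by (subst avg_add_const[OF k]) (simp add: \<eta>_def field_simps)
  moreover have "?C (xs (\<tau> j)) (Es (\<tau> j)) < c + 1 / (real (\<tau> j) + 1)" by (rule xsE(2))
  ultimately show False using j2 by simp
qed

end

lemma avg_cong: "(\<And>xs. xs \<in> words k n \<Longrightarrow> G xs = H xs) \<Longrightarrow> avg k n G = avg k n H"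
  unfolding avg_def by (metis (mono_tags, lifting) sum.cong)

theorem mainTheorem7:
  fixes M :: "'a::euclidean_space set"
    and f :: "nat \<Rightarrow> 'a \<Rightarrow> 'a"
    and k n0 b :: nat and \<kappa>1 \<kappa>2 :: real
  assumes "k \<ge> 1"
    and "compact M" and "M \<noteq> {}"
    and "C1_submanifold TYPE('m::euclidean_space) M"
    and "\<And>i. i \<in> {1..k} \<Longrightarrow> C1_diffeo_of M (f i)"
    and "\<And>i. i \<in> {1..k} \<Longrightarrow> volume_preserving DIM('m) M (f i)"
    and "uniform_IFS k DIM('m) M f n0 \<kappa>1 \<kappa>2 b"
  shows "\<exists>C1 \<sigma>. C1 > 0 \<and> \<sigma> > 0 \<and>
     (\<forall>x\<in>M. \<forall>E. subspace E \<and> E \<subseteq> tangent_space M x \<and> dim E = DIM('m) - b \<longrightarrow>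
        (\<forall>n::nat.
          (\<integral>\<omega>. sup_transv M f x E n \<omega> powr \<sigma> \<partial>bernoulli_space k) < C1 * exp (- real n * \<sigma> * \<kappa>1) \<and>
          (\<integral>\<omega>. inf_along f x E n \<omega> powr (- \<sigma>) \<partial>bernoulli_space k) < C1 * exp (real n * \<sigma> * \<kappa>2)))"
proof -
  note k = assms(1)
  note man = assms(4)
  have unif: "n0 \<ge> 1" "\<kappa>1 > 0" "\<kappa>2 < \<kappa>1" "1 \<le> b" "b \<le> DIM('m) - 1"
    and hypCD: "\<And>x E. x \<in> M \<Longrightarrow> subspace E \<and> E \<subseteq> tangent_space M x \<and> dim E = DIM('m) - b \<Longrightarrow>
        C_fun k M f x E n0 / real n0 < - \<kappa>1 \<and> D_fun k f x E n0 / real n0 > - \<kappa>2"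
    using assms(7) unfolding uniform_IFS_def by auto
  have "\<forall>i\<in>{1..k}. \<exists>D. (\<forall>y. (f i has_derivative blinfun_apply (D y)) (at y)) \<and> continuous_on UNIV D"
  proof
    fix i assume "i \<in> {1..k}"
    then have "C1_on UNIV (f i)" using assms(5) unfolding C1_diffeo_of_def by blast
    then show "\<exists>D. (\<forall>y. (f i has_derivative blinfun_apply (D y)) (at y)) \<and> continuous_on UNIV D"
      unfolding C1_on_def by simp
  qed
  from bchoice[OF this] obtain Df where Df0: "\<forall>i\<in>{1..k}. (\<forall>y. (f i has_derivative blinfun_apply (Df i y)) (at y)) \<and> continuous_on UNIV (Df i)"
    by blast
  have Df: "\<And>i. i \<in> {1..k} \<Longrightarrow> (\<forall>y. (f i has_derivative blinfun_apply (Df i y)) (at y)) \<and> continuous_on UNIV (Df i)"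
    using Df0 by blast
  have "\<forall>i\<in>{1..k}. \<exists>p. (\<forall>y. (fst p has_derivative blinfun_apply (snd p y)) (at y)) \<and> continuous_on UNIV (snd p) \<and>
      (\<forall>x\<in>M. fst p (f i x) = x)"
  proof
    fix i assume i: "i \<in> {1..k}"
    obtain hh where hh: "C1_on UNIV hh" "\<forall>x\<in>M. hh (f i x) = x \<and> f i (hh x) = x"
      using assms(5)[OF i] unfolding C1_diffeo_of_def by blast
    obtain D where "\<forall>y\<in>UNIV. (hh has_derivative blinfun_apply (D y)) (at y)" "continuous_on UNIV D"
      using hh(1) unfolding C1_on_def by blast
    then show "\<exists>p. (\<forall>y. (fst p has_derivative blinfun_apply (snd p y)) (at y)) \<and> continuous_on UNIV (snd p) \<and>
      (\<forall>x\<in>M. fst p (f i x) = x)" using hh(2) by (intro exI[of _ "(hh, D)"]) auto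
  qed
  from bchoice[OF this] obtain P where P0: "\<forall>i\<in>{1..k}. (\<forall>y. (fst (P i) has_derivative blinfun_apply (snd (P i) y)) (at y)) \<and>
      continuous_on UNIV (snd (P i)) \<and> (\<forall>x\<in>M. fst (P i) (f i x) = x)"
    by blast
  have P: "\<And>i. i \<in> {1..k} \<Longrightarrow> (\<forall>y. (fst (P i) has_derivative blinfun_apply (snd (P i) y)) (at y)) \<and>
      continuous_on UNIV (snd (P i)) \<and> (\<forall>x\<in>M. fst (P i) (f i x) = x)"
    using P0 by blast
  define h where "h i = fst (P i)" for i
  define Dh where "Dh i = snd (P i)" for i
  define d where "d = DIM('m)"
  define r where "r = d - b"
  have fM: "f i x \<in> M" if "i \<in> {1..k}" "x \<in> M" for i x
    using assms(5)[OF that(1)] that(2) unfolding C1_diffeo_of_def by blast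
  interpret dyn2 M f k Df h Dh d r
  proof
    show "compact M" by (rule assms(2))
    show "\<And>i y. i \<in> {1..k} \<Longrightarrow> (f i has_derivative blinfun_apply (Df i y)) (at y)" using Df by blast
    show "\<And>i. i \<in> {1..k} \<Longrightarrow> continuous_on UNIV (Df i)" using Df by blast
    show "\<And>i x. i \<in> {1..k} \<Longrightarrow> x \<in> M \<Longrightarrow> f i x \<in> M" by (rule fM)
    show "\<And>i y. i \<in> {1..k} \<Longrightarrow> (h i has_derivative blinfun_apply (Dh i y)) (at y)" using P unfolding h_def Dh_def by blast
    show "\<And>i. i \<in> {1..k} \<Longrightarrow> continuous_on UNIV (Dh i)" using P unfolding Dh_def by blast
    show "\<And>i x. i \<in> {1..k} \<Longrightarrow> x \<in> M \<Longrightarrow> h i (f i x) = x" using P unfolding h_def by blast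
    show "\<And>x. x \<in> M \<Longrightarrow> subspace (tangent_space M x)" using tangent_space_subspace_dim(1)[OF man] by blast
    show "\<And>x. x \<in> M \<Longrightarrow> dim (tangent_space M x) = d" using tangent_space_subspace_dim(2)[OF man] unfolding d_def by blast
    show "\<And>x xs vs v. x \<in> M \<Longrightarrow> (\<And>j. xs j \<in> M) \<Longrightarrow> xs \<longlonglongrightarrow> x \<Longrightarrow>
        (\<And>j. vs j \<in> tangent_space M (xs j)) \<Longrightarrow> vs \<longlonglongrightarrow> v \<Longrightarrow> v \<in> tangent_space M x"
      using tangent_bundle_closed[OF man] by blast
    show "1 \<le> r" using unif(4,5) unfolding r_def d_def by linarith
    show "r < d" using unif(4,5) unfolding r_def d_def by linarith
  qed
  have good_iff: "good x E \<longleftrightarrow> x \<in> M \<and> subspace E \<and> E \<subseteq> tangent_space M x \<and> dim E = DIM('m) - b" for x E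
    unfolding good_def by (auto simp: r_def d_def)
  define GS where "GS x E xs = ST (T x) (T (fw f xs x)) E (Dmap (fw f xs) x)" for x E xs
  define GI where "GI x E xs = IA E (Dmap (fw f xs) x)" for x E xs
  have sup_eq: "sup_transv M f x E n \<omega> = GS x E (pre n \<omega>)" for x E n \<omega>
    unfolding sup_transv_def GS_def ST_def Dfn_def fiter_fw ..
  have inf_eq: "inf_along f x E n \<omega> = GI x E (pre n \<omega>)" for x E n \<omega>
    unfolding inf_along_def GI_def IA_def Dfn_def fiter_fw ..
  have GS_eq: "GS x E xs = STw x E xs" if "xs \<in> words k n" for x E xs n
    unfolding GS_def STw_def using Dmap_fw[OF words_set(1)[OF that]] by simp
  have GI_eq: "GI x E xs = IAw x E xs" if "xs \<in> words k n" for x E xs n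
    unfolding GI_def IAw_def using Dmap_fw[OF words_set(1)[OF that]] by simp
  have int_S: "(\<integral>\<omega>. F (sup_transv M f x E n \<omega>) \<partial>bernoulli_space k) = avg k n (\<lambda>xs. F (STw x E xs))" for F x E n
  proof -
    have "(\<integral>\<omega>. F (sup_transv M f x E n \<omega>) \<partial>bernoulli_space k) = (\<integral>\<omega>. (\<lambda>xs. F (GS x E xs)) (pre n \<omega>) \<partial>bernoulli_space k)"
      by (simp add: sup_eq)
    also have "\<dots> = avg k n (\<lambda>xs. F (GS x E xs))" by (rule integral_bernoulli_avg[OF k])
    also have "\<dots> = avg k n (\<lambda>xs. F (STw x E xs))" by (rule avg_cong) (simp add: GS_eq)
    finally show ?thesis .
  qed
  have int_I: "(\<integral>\<omega>. F (inf_along f x E n \<omega>) \<partial>bernoulli_space k) = avg k n (\<lambda>xs. F (IAw x E xs))" for F x E n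
  proof -
    have "(\<integral>\<omega>. F (inf_along f x E n \<omega>) \<partial>bernoulli_space k) = (\<integral>\<omega>. (\<lambda>xs. F (GI x E xs)) (pre n \<omega>) \<partial>bernoulli_space k)"
      by (simp add: inf_eq)
    also have "\<dots> = avg k n (\<lambda>xs. F (GI x E xs))" by (rule integral_bernoulli_avg[OF k])
    also have "\<dots> = avg k n (\<lambda>xs. F (IAw x E xs))" by (rule avg_cong) (simp add: GI_eq)
    finally show ?thesis .
  qed
  have n0pos: "real n0 > 0" using unif(1) by simp
  have hC: "avg k n0 (\<lambda>xs. ln (STw x E xs)) < - (real n0 * \<kappa>1)" if g: "good x E" for x E
  proof -
    have "C_fun k M f x E n0 / real n0 < - \<kappa>1" using hypCD g unfolding good_iff by blast
    then have "C_fun k M f x E n0 < - (real n0 * \<kappa>1)" using n0pos by (simp add: field_simps)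
    moreover have "C_fun k M f x E n0 = avg k n0 (\<lambda>xs. ln (STw x E xs))"
      unfolding C_fun_def by (rule int_S)
    ultimately show ?thesis by simp
  qed
  have hD: "- (real n0 * \<kappa>2) < avg k n0 (\<lambda>xs. ln (IAw x E xs))" if g: "good x E" for x E
  proof -
    have "D_fun k f x E n0 / real n0 > - \<kappa>2" using hypCD g unfolding good_iff by blast
    then have "D_fun k f x E n0 > - (real n0 * \<kappa>2)" using n0pos by (simp add: field_simps)
    moreover have "D_fun k f x E n0 = avg k n0 (\<lambda>xs. ln (IAw x E xs))"
      unfolding D_fun_def by (rule int_I)
    ultimately show ?thesis by simp
  qed
  obtain \<delta>1 where \<delta>1: "\<delta>1 > 0" "\<And>x E. good x E \<Longrightarrow> avg k n0 (\<lambda>xs. ln (STw x E xs)) \<le> - (real n0 * \<kappa>1) - \<delta>1"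
    using gap_C[OF k hC] by blast
  obtain \<delta>2 where \<delta>2: "\<delta>2 > 0" "\<And>x E. good x E \<Longrightarrow> - (real n0 * \<kappa>2) + \<delta>2 \<le> avg k n0 (\<lambda>xs. ln (IAw x E xs))"
    using gap_D[OF k hD] by blast
  define K where "K = real n0 * ln Lb + 1"
  have lnLb: "ln Lb \<ge> 0" using Lb(1) by simp
  have K1: "K \<ge> 1" unfolding K_def using lnLb by simp
  define \<delta> where "\<delta> = min \<delta>1 \<delta>2"
  have \<delta>: "\<delta> > 0" "\<delta> \<le> \<delta>1" "\<delta> \<le> \<delta>2" using \<delta>1 \<delta>2 by (auto simp: \<delta>_def)
  define \<sigma> where "\<sigma> = min (1 / K) (\<delta> / K\<^sup>2)"
  have \<sigma>: "\<sigma> > 0" "\<sigma> \<le> 1 / K" "\<sigma> \<le> \<delta> / K\<^sup>2" using K1 \<delta> by (auto simp: \<sigma>_def)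
  have lnS: "\<bar>ln (STw x E xs)\<bar> \<le> K" if g: "good x E" and xs: "xs \<in> words k n0" for x E xs
  proof -
    have p: "0 < STw x E xs" by (rule STw_pos[OF g words_set(1)[OF xs]])
    have "ln (STw x E xs) \<le> ln (Lb ^ n0)"
      using STw_upper[OF g words_set(1)[OF xs]] p words_set(2)[OF xs] by simp
    moreover have "ln (1 / Lb ^ n0) \<le> ln (STw x E xs)"
      using STw_lower[OF g words_set(1)[OF xs]] p words_set(2)[OF xs] Lb(1) by simp
    ultimately show ?thesis using Lb(1) by (simp add: K_def ln_realpow ln_div)
  qed
  have lnI: "\<bar>- ln (IAw x E xs)\<bar> \<le> K" if g: "good x E" and xs: "xs \<in> words k n0" for x E xs
  proof -
    have p: "0 < IAw x E xs" by (rule IAw_pos[OF g words_set(1)[OF xs]])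
    have "ln (IAw x E xs) \<le> ln (Lb ^ n0)"
      using IAw_upper[OF g words_set(1)[OF xs]] p words_set(2)[OF xs] by simp
    moreover have "ln (1 / Lb ^ n0) \<le> ln (IAw x E xs)"
      using IAw_lower[OF g words_set(1)[OF xs]] p words_set(2)[OF xs] Lb(1) by simp
    ultimately show ?thesis using Lb(1) by (simp add: K_def ln_realpow ln_div)
  qed
  have stepS: "avg k n0 (\<lambda>xs. STw x E xs powr \<sigma>) \<le> exp (- real n0 * \<sigma> * \<kappa>1)" if g: "good x E" for x E
  proof -
    have "avg k n0 (\<lambda>xs. STw x E xs powr \<sigma>) = avg k n0 (\<lambda>xs. exp (\<sigma> * ln (STw x E xs)))"
    proof (rule avg_cong)
      fix xs assume xs: "xs \<in> words k n0"
      have "0 < STw x E xs" by (rule STw_pos[OF g words_set(1)[OF xs]])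
      then show "STw x E xs powr \<sigma> = exp (\<sigma> * ln (STw x E xs))" by (simp add: powr_def)
    qed
    also have "\<dots> \<le> exp (\<sigma> * (- (real n0 * \<kappa>1)))"
      by (rule avg_exp_bound[OF k K1 lnS[OF g] _ \<delta>(1) \<sigma>]) (use \<delta>1(2)[OF g] \<delta>(2) in auto)
    finally show ?thesis by (simp add: mult_ac)
  qed
  have stepI: "avg k n0 (\<lambda>xs. IAw x E xs powr (- \<sigma>)) \<le> exp (real n0 * \<sigma> * \<kappa>2)" if g: "good x E" for x E
  proof -
    have "avg k n0 (\<lambda>xs. IAw x E xs powr (- \<sigma>)) = avg k n0 (\<lambda>xs. exp (\<sigma> * (- ln (IAw x E xs))))"
    proof (rule avg_cong)
      fix xs assume xs: "xs \<in> words k n0"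
      have "0 < IAw x E xs" by (rule IAw_pos[OF g words_set(1)[OF xs]])
      then show "IAw x E xs powr (- \<sigma>) = exp (\<sigma> * (- ln (IAw x E xs)))" by (simp add: powr_def)
    qed
    also have "\<dots> \<le> exp (\<sigma> * (real n0 * \<kappa>2))"
    proof (rule avg_exp_bound[OF k K1 lnI[OF g] _ \<delta>(1) \<sigma>])
      have "avg k n0 (\<lambda>xs. - ln (IAw x E xs)) = - avg k n0 (\<lambda>xs. ln (IAw x E xs))"
        using avg_mult_const[of k n0 "-1" "\<lambda>xs. ln (IAw x E xs)"] by simp
      then show "avg k n0 (\<lambda>xs. - ln (IAw x E xs)) \<le> real n0 * \<kappa>2 - \<delta>"
        using \<delta>2(2)[OF g] \<delta>(3) by simp
    qed
    finally show ?thesis by (simp add: mult_ac)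
  qed
  define CS where "CS = Lb powr (\<sigma> * n0) * exp (\<sigma> * n0 * \<kappa>1)"
  define CI where "CI = Lb powr (\<sigma> * n0) * exp (\<sigma> * n0 * \<bar>\<kappa>2\<bar>)"
  have CS: "CS > 0" and CI: "CI > 0" using Lb(1) by (auto simp: CS_def CI_def)
  define C1 where "C1 = 2 * (CS + CI)"
  have C1pos: "C1 > 0" using CS CI by (simp add: C1_def)
  have main: "\<forall>x\<in>M. \<forall>E. subspace E \<and> E \<subseteq> tangent_space M x \<and> dim E = DIM('m) - b \<longrightarrow>
        (\<forall>n::nat.
          (\<integral>\<omega>. sup_transv M f x E n \<omega> powr \<sigma> \<partial>bernoulli_space k) < C1 * exp (- real n * \<sigma> * \<kappa>1) \<and>
          (\<integral>\<omega>. inf_along f x E n \<omega> powr (- \<sigma>) \<partial>bernoulli_space k) < C1 * exp (real n * \<sigma> * \<kappa>2))"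
  proof (intro ballI allI impI conjI)
    fix x E n
    assume x: "x \<in> M" and E: "subspace E \<and> E \<subseteq> tangent_space M x \<and> dim E = DIM('m) - b"
    have g: "good x E" using x E unfolding good_iff by blast
    have "(\<integral>\<omega>. sup_transv M f x E n \<omega> powr \<sigma> \<partial>bernoulli_space k) = avg k n (\<lambda>xs. STw x E xs powr \<sigma>)"
      by (rule int_S)
    also have "\<dots> \<le> CS * exp (- real n * \<sigma> * \<kappa>1)"
      unfolding CS_def by (rule ST_decay[OF k unif(1) unif(2) \<sigma>(1) stepS g])
    also have "\<dots> < C1 * exp (- real n * \<sigma> * \<kappa>1)"
      using CS CI by (intro mult_strict_right_mono) (auto simp: C1_def)
    finally show "(\<integral>\<omega>. sup_transv M f x E n \<omega> powr \<sigma> \<partial>bernoulli_space k) < C1 * exp (- real n * \<sigma> * \<kappa>1)" .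
    have "(\<integral>\<omega>. inf_along f x E n \<omega> powr (- \<sigma>) \<partial>bernoulli_space k) = avg k n (\<lambda>xs. IAw x E xs powr (- \<sigma>))"
      by (rule int_I)
    also have "\<dots> \<le> CI * exp (real n * \<sigma> * \<kappa>2)"
      unfolding CI_def by (rule IA_decay[OF k unif(1) \<sigma>(1) stepI g])
    also have "\<dots> < C1 * exp (real n * \<sigma> * \<kappa>2)"
      using CS CI by (intro mult_strict_right_mono) (auto simp: C1_def)
    finally show "(\<integral>\<omega>. inf_along f x E n \<omega> powr (- \<sigma>) \<partial>bernoulli_space k) < C1 * exp (real n * \<sigma> * \<kappa>2)" .
  qed
  show ?thesis using C1pos \<sigma>(1) main by blast
qed

end
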